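(* Let $X$ be a separable Banach space, let $(E'_j)$ be a $1$-norming FMD of $X$ with biorthogonal sequence $(F'_j)$. Then $(E'_j)$ can be blocked to an FMD $(E_n)$ such that $(E_n)$ and its biorthogonal sequence $(F_n)$ satisfy, for all $m\le n$ in $\mathbb N$ (with $E_0=\{0\}\subset X$, $F_0=\{0\}\subset X^*$): (1) for every $e^*\in(E_m+E_{m+1}+\dots+E_n)^*$ there is $x^*\in F_{m-1}+F_m+\dots+F_{n+1}$ with $x^*|_{E_m+\dots+E_n}=e^*$ and $\|x^*\|\le 2.5\|e^*\|$; (2) for every $f^*\in(F_m+F_{m+1}+\dots+F_n)^*$ there is $z\in E_{m-1}+E_m+\dots+E_{n+1}$ with $z|_{F_m+\dots+F_n}=f^*$ (i.e. $f(z)=f^*(f)$ for all $f\in F_m+\dots+F_n$) and $\|z\|\le 2.5\|f^*\|$; (3) for all $x^*\in F_m+\dots+F_n$: $\|x^*\|\le 2.5\sup\{|x^*(x)|: x\in E_{m-1}+E_m+\dots+E_{n+1},\|x\|\le1\}$; (4) for all $x\in E_m+\dots+E_n$: $\|x\|\le 2.5\sup\{|x^*(x)|: x^*\in F_{m-1}+F_m+\dots+F_{n+1},\|x^*\|\le1\}$.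
   Context: A sequence $(E_k)$ of finite dimensional subspaces of $X$ is an FMD of $X$ if, with $F_k=\{f\in X^*: f|_{E_j}=0 \text{ for all } j\neq k\}$ (the biorthogonal sequence), (a) $\mathrm{span}(E_k)$ is dense in $X$, (b) $E_k\cap\overline{\mathrm{span}(E_j:j\ne k)}=\{0\}$ for every $k$, and (c) $(F_k)$ is total ($f(x)=0$ for all $f\in\bigcup_kF_k$ implies $x=0$). The FMD is $1$-norming if $\sup\{f(x): f\in\mathrm{span}(F_j:j\in\mathbb N),\|f\|\le1\}\ge\|x\|$ for all $x\in X$. A blocking of $(E'_j)$ is a sequence $E_k=\mathrm{span}(E'_j:n_{k-1}<j\le n_k)$ for some $0=n_0<n_1<n_2<\cdots$ in $\mathbb N$; it is again an FMD with biorthogonal sequence $F_k=\mathrm{span}(F'_j:n_{k-1}<j\le n_k)$. *)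

theory Defs
  imports "HOL-Analysis.Analysis"
begin

(* Real Banach spaces; the dual X* is the type of bounded linear functionals
  'a =>L real.  Sequences of subspaces are indexed by nat, with meaningful
  indices k >= 1 (index 0 is reserved for the zero space E_0, F_0). *)

definition separable_space :: "'a::metric_space itself \<Rightarrow> bool" where
  "separable_space _ \<longleftrightarrow> (\<exists>D::'a set. countable D \<and> closure D = UNIV)"

definition fin_dim_subspace :: "'a::real_vector set \<Rightarrow> bool" where
  "fin_dim_subspace S \<longleftrightarrow> subspace S \<and> (\<exists>B. finite B \<and> S = span B)"

definition biorth :: "(nat \<Rightarrow> 'a::real_normed_vector set) \<Rightarrow> nat \<Rightarrow> ('a \<Rightarrow>\<^sub>L real) set" where
  "biorth E k = {f. \<forall>j\<ge>1. j \<noteq> k \<longrightarrow> (\<forall>x\<in>E j. blinfun_apply f x = 0)}"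

definition FMD :: "(nat \<Rightarrow> 'a::real_normed_vector set) \<Rightarrow> bool" where
  "FMD E \<longleftrightarrow>
     (\<forall>k\<ge>1. fin_dim_subspace (E k)) \<and>
     closure (span (\<Union>k\<in>{1..}. E k)) = UNIV \<and>
     (\<forall>k\<ge>1. E k \<inter> closure (span (\<Union>j\<in>{1..} - {k}. E j)) = {0}) \<and>
     (\<forall>x. (\<forall>k\<ge>1. \<forall>f\<in>biorth E k. blinfun_apply f x = 0) \<longrightarrow> x = 0)"

definition one_norming :: "(nat \<Rightarrow> 'a::real_normed_vector set) \<Rightarrow> bool" where
  "one_norming E \<longleftrightarrow>
     (\<forall>x. norm x \<le> Sup {blinfun_apply f x | f. f \<in> span (\<Union>k\<in>{1..}. biorth E k) \<and> norm f \<le> 1})"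

definition is_blocking :: "(nat \<Rightarrow> 'a::real_vector set) \<Rightarrow> (nat \<Rightarrow> 'a set) \<Rightarrow> bool" where
  "is_blocking E' E \<longleftrightarrow>
     (\<exists>n::nat \<Rightarrow> nat. n 0 = 0 \<and> strict_mono n \<and>
        (\<forall>k\<ge>1. E k = span (\<Union>j\<in>{n (k - 1)<..n k}. E' j)))"

definition biorth0 :: "(nat \<Rightarrow> 'a::real_normed_vector set) \<Rightarrow> nat \<Rightarrow> ('a \<Rightarrow>\<^sub>L real) set" where
  "biorth0 E k = (if k = 0 then {0} else biorth E k)"

definition lin_functional_on :: "'a::real_vector set \<Rightarrow> ('a \<Rightarrow> real) \<Rightarrow> bool" where
  "lin_functional_on S g \<longleftrightarrow>
     (\<forall>x\<in>S. \<forall>y\<in>S. g (x + y) = g x + g y) \<and> (\<forall>x\<in>S. \<forall>c. g (c *\<^sub>R x) = c * g x)"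

definition dual_norm_on :: "'a::real_normed_vector set \<Rightarrow> ('a \<Rightarrow> real) \<Rightarrow> real" where
  "dual_norm_on S g = Sup {\<bar>g x\<bar> | x. x \<in> S \<and> norm x \<le> 1}"

end

theory Submission
  imports Defs
begin

lemma dist_lemma:
  fixes b :: "'v::real_normed_vector"
  assumes cpt: "compact (span B \<inter> cball 0 (2 * norm b))" and nb: "b \<notin> span B"
  shows "\<exists>d>0. \<forall>y\<in>span B. d \<le> norm (b - y)"
proof -
  let ?K = "span B \<inter> cball 0 (2 * norm b)"
  have "0 \<in> ?K" by (simp add: span_zero)
  hence ne: "?K \<noteq> {}" by blast
  have "continuous_on ?K (\<lambda>y. norm (b - y))" by (intro continuous_intros)
  then obtain y0 where y0: "y0 \<in> ?K" "\<And>y. y \<in> ?K \<Longrightarrow> norm (b - y0) \<le> norm (b - y)"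
    using continuous_attains_inf[OF cpt ne] by blast
  have d0: "norm (b - y0) > 0" using y0(1) nb by auto
  have bnz: "b \<noteq> 0" using nb span_zero by auto
  hence nb0: "norm b > 0" by simp
  show ?thesis
  proof (intro exI[of _ "min (norm (b - y0)) (norm b)"] conjI ballI)
    show "0 < min (norm (b - y0)) (norm b)" using d0 nb0 by simp
    fix y assume y: "y \<in> span B"
    show "min (norm (b - y0)) (norm b) \<le> norm (b - y)"
    proof (cases "norm y \<le> 2 * norm b")
      case True
      hence "y \<in> ?K" using y by auto
      thus ?thesis using y0(2) by fastforce
    next
      case False
      have "norm y - norm b \<le> norm (b - y)"
        by (metis norm_minus_commute norm_triangle_ineq2)
      thus ?thesis using False by linarith
    qed
  qed
qed

lemma decomp_bound:
  fixes b :: "'v::real_normed_vector"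
  assumes d: "d > 0" "\<forall>y\<in>span B. d \<le> norm (b - y)" and y: "y \<in> span B"
  shows "\<bar>k\<bar> * d \<le> norm (k *\<^sub>R b + y)"
proof (cases "k = 0")
  case True thus ?thesis by simp
next
  case False
  have "(-(1/k)) *\<^sub>R y \<in> span B" using y by (simp add: span_scale span_neg)
  hence "d \<le> norm (b - (-(1/k)) *\<^sub>R y)" using d by blast
  also have "b - (-(1/k)) *\<^sub>R y = (1/k) *\<^sub>R (k *\<^sub>R b + y)" using False
    by (simp add: algebra_simps)
  finally have "d \<le> norm (k *\<^sub>R b + y) / \<bar>k\<bar>" by simp
  moreover have "\<bar>k\<bar> > 0" using False by simp
  ultimately show ?thesis by (simp add: le_divide_eq mult.commute)
qed

lemma compact_span_cball:
  fixes B :: "'v::real_normed_vector set"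
  assumes "finite B"
  shows "compact (span B \<inter> cball 0 r)"
  using assms
proof (induction B arbitrary: r rule: finite_induct)
  case empty
  have "span {} \<inter> cball (0::'v) r \<subseteq> {0}" by auto
  hence "finite (span {} \<inter> cball (0::'v) r)" using finite_subset by blast
  thus ?case by (rule finite_imp_compact)
next
  case (insert b B)
  show ?case
  proof (cases "b \<in> span B")
    case True
    hence "span (insert b B) = span B" by (simp add: span_redundant)
    thus ?thesis using insert.IH by simp
  next
    case False
    obtain d where d: "d > 0" "\<forall>y\<in>span B. d \<le> norm (b - y)"
      using dist_lemma[OF insert.IH False] by blast
    let ?f = "\<lambda>z::real \<times> 'v. fst z *\<^sub>R b + snd z"
    let ?T = "{-(r/d)..r/d} \<times> (span B \<inter> cball 0 (r + r/d * norm b))"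
    have cT: "compact ?T" by (intro compact_Times compact_Icc insert.IH)
    have "continuous_on ?T ?f" by (intro continuous_intros)
    hence c1: "compact (?f ` ?T)" using cT compact_continuous_image by blast
    have eq: "span (insert b B) \<inter> cball 0 r = ?f ` ?T \<inter> cball 0 r"
    proof
      show "span (insert b B) \<inter> cball 0 r \<subseteq> ?f ` ?T \<inter> cball 0 r"
      proof
        fix x assume x: "x \<in> span (insert b B) \<inter> cball 0 r"
        then obtain k where k: "x - k *\<^sub>R b \<in> span B" using span_breakdown_eq by blast
        define y where "y = x - k *\<^sub>R b"
        have xy: "x = k *\<^sub>R b + y" by (simp add: y_def)
        have nx: "norm x \<le> r" using x by auto
        have yB: "y \<in> span B" using k unfolding y_def .
        have "\<bar>k\<bar> * d \<le> norm (k *\<^sub>R b + y)" using decomp_bound[OF d yB, of k] .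
        hence "\<bar>k\<bar> * d \<le> norm x" using xy by simp
        hence kb: "\<bar>k\<bar> \<le> r / d" using nx d by (simp add: field_simps)
        have "norm y \<le> norm x + norm (k *\<^sub>R b)" unfolding y_def by (rule norm_triangle_ineq4)
        also have "\<dots> \<le> r + r/d * norm b"
        proof -
          have "\<bar>k\<bar> * norm b \<le> r/d * norm b" using kb by (rule mult_right_mono) simp
          thus ?thesis using nx by simp
        qed
        finally have "y \<in> span B \<inter> cball 0 (r + r/d * norm b)" using yB by auto
        moreover have "k \<in> {-(r/d)..r/d}" using kb by auto
        ultimately have "(k, y) \<in> ?T" by auto
        moreover have "x = ?f (k, y)" using xy by simp
        ultimately show "x \<in> ?f ` ?T \<inter> cball 0 r" using x by (intro IntI rev_image_eqI) auto
      qed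
    next
      show "?f ` ?T \<inter> cball 0 r \<subseteq> span (insert b B) \<inter> cball 0 r"
      proof
        fix x assume "x \<in> ?f ` ?T \<inter> cball 0 r"
        then obtain k y where "x = k *\<^sub>R b + y" "y \<in> span B" "x \<in> cball 0 r" by auto
        moreover have "k *\<^sub>R b + y \<in> span (insert b B)"
        proof -
          have "y \<in> span (insert b B)" using \<open>y \<in> span B\<close> span_mono[of B "insert b B"] by auto
          moreover have "b \<in> span (insert b B)" by (simp add: span_base)
          ultimately show ?thesis by (simp add: span_add span_scale)
        qed
        ultimately show "x \<in> span (insert b B) \<inter> cball 0 r" by auto
      qed
    qed
    show ?thesis unfolding eq by (intro compact_Int_closed c1 closed_cball)
  qed
qed

lemma dist_span:
  fixes b :: "'v::real_normed_vector"
  assumes "finite B" "b \<notin> span B"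
  shows "\<exists>d>0. \<forall>y\<in>span B. d \<le> norm (b - y)"
  using dist_lemma[OF compact_span_cball[OF assms(1)] assms(2)] .

lemma lin_zero:
  assumes "lin_functional_on S e" "0 \<in> S" shows "e 0 = 0"
  using assms unfolding lin_functional_on_def by (metis mult_zero_left scale_zero_left)

lemma lin_mono: "lin_functional_on S e \<Longrightarrow> T \<subseteq> S \<Longrightarrow> lin_functional_on T e"
  unfolding lin_functional_on_def by blast

lemma lin_bounded:
  fixes B :: "'v::real_normed_vector set"
  assumes "finite B" "lin_functional_on (span B) e"
  shows "\<exists>M\<ge>0. \<forall>x\<in>span B. \<bar>e x\<bar> \<le> M * norm x"
  using assms
proof (induction B arbitrary: rule: finite_induct)
  case empty
  have "e 0 = 0" using lin_zero[OF empty.prems] by (simp add: span_zero)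
  thus ?case by (intro exI[of _ 0]) auto
next
  case (insert b B)
  show ?case
  proof (cases "b \<in> span B")
    case True
    hence "span (insert b B) = span B" by (simp add: span_redundant)
    thus ?thesis using insert by simp
  next
    case False
    have sub: "span B \<subseteq> span (insert b B)" by (simp add: span_mono subset_insertI)
    obtain M where M: "M \<ge> 0" "\<forall>x\<in>span B. \<bar>e x\<bar> \<le> M * norm x"
      using insert.IH[OF lin_mono[OF insert.prems sub]] by blast
    obtain d where d: "d > 0" "\<forall>y\<in>span B. d \<le> norm (b - y)"
      using dist_span[OF insert.hyps(1) False] by blast
    have bin: "b \<in> span (insert b B)" by (simp add: span_base)
    let ?M = "(\<bar>e b\<bar> + M * norm b) / d + M"
    show ?thesis
    proof (intro exI[of _ ?M] conjI ballI)
      show "0 \<le> ?M" using M d by simp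
      fix x assume x: "x \<in> span (insert b B)"
      then obtain k where k: "x - k *\<^sub>R b \<in> span B" using span_breakdown_eq by blast
      define y where "y = x - k *\<^sub>R b"
      have xy: "x = k *\<^sub>R b + y" by (simp add: y_def)
      have yin: "y \<in> span B" using k unfolding y_def .
      have kd: "\<bar>k\<bar> * d \<le> norm x" using decomp_bound[OF d yin, of k] xy by simp
      have kbin: "k *\<^sub>R b \<in> span (insert b B)" using bin by (simp add: span_scale)
      have "e x = e (k *\<^sub>R b) + e y" using insert.prems kbin sub yin xy
        unfolding lin_functional_on_def by blast
      also have "e (k *\<^sub>R b) = k * e b" using insert.prems bin unfolding lin_functional_on_def by blast
      finally have ex: "e x = k * e b + e y" .
      have ny: "norm y \<le> norm x + \<bar>k\<bar> * norm b" unfolding y_def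
        using norm_triangle_ineq4[of x "k *\<^sub>R b"] by simp
      have "\<bar>e x\<bar> \<le> \<bar>k * e b\<bar> + \<bar>e y\<bar>" unfolding ex by (rule abs_triangle_ineq)
      also have "\<dots> \<le> \<bar>k\<bar> * \<bar>e b\<bar> + M * norm y" using M(2) yin by (simp add: abs_mult)
      also have "\<dots> \<le> \<bar>k\<bar> * \<bar>e b\<bar> + M * (norm x + \<bar>k\<bar> * norm b)"
        using ny M(1) by (simp add: mult_left_mono)
      also have "\<dots> = \<bar>k\<bar> * (\<bar>e b\<bar> + M * norm b) + M * norm x" by (simp add: algebra_simps)
      also have "\<dots> \<le> (norm x / d) * (\<bar>e b\<bar> + M * norm b) + M * norm x"
      proof -
        have "\<bar>k\<bar> \<le> norm x / d" using kd d by (simp add: field_simps)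
        hence "\<bar>k\<bar> * (\<bar>e b\<bar> + M * norm b) \<le> (norm x / d) * (\<bar>e b\<bar> + M * norm b)"
          by (rule mult_right_mono) (use M(1) in simp)
        thus ?thesis by simp
      qed
      also have "\<dots> = ?M * norm x" by (simp add: algebra_simps add_divide_distrib)
      finally show "\<bar>e x\<bar> \<le> ?M * norm x" .
    qed
  qed
qed

lemma cover_mono:
  fixes K :: "'v::topological_space set" and Op :: "'i \<Rightarrow> 'v set" and I :: "nat \<Rightarrow> 'i set"
  assumes cK: "compact K" and op: "\<And>i. open (Op i)"
    and cov: "\<And>x. x \<in> K \<Longrightarrow> \<exists>N. \<exists>i\<in>I N. x \<in> Op i"
    and mono: "\<And>N N'. N \<le> N' \<Longrightarrow> I N \<subseteq> I N'"
  shows "\<exists>N S. finite S \<and> S \<subseteq> I N \<and> K \<subseteq> (\<Union>i\<in>S. Op i)"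
proof -
  let ?J = "\<Union>N. I N"
  have cov2: "K \<subseteq> (\<Union>i\<in>?J. Op i)" using cov by blast
  obtain S where S: "S \<subseteq> ?J" "finite S" "K \<subseteq> (\<Union>i\<in>S. Op i)"
  proof (rule compactE_image[OF cK _ cov2])
    fix T show "open (Op T)" by (rule op)
  next
    fix C' assume "C' \<subseteq> ?J" "finite C'" "K \<subseteq> (\<Union>i\<in>C'. Op i)"
    thus thesis using that by blast
  qed
  define g where "g i = (SOME N. i \<in> I N)" for i
  have g: "i \<in> I (g i)" if "i \<in> S" for i
  proof -
    have "\<exists>N. i \<in> I N" using S(1) that by blast
    thus ?thesis unfolding g_def by (rule someI_ex)
  qed
  define N where "N = Max (insert 0 (g ` S))"
  have "S \<subseteq> I N"
  proof
    fix i assume i: "i \<in> S"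
    have "g i \<le> N" unfolding N_def using S(2) i by simp
    thus "i \<in> I N" using mono g[OF i] by blast
  qed
  thus ?thesis using S by blast
qed

lemma compact_sphere_span:
  fixes B :: "'v::real_normed_vector set"
  assumes "finite B" shows "compact (span B \<inter> sphere 0 1)"
proof -
  have e: "span B \<inter> sphere 0 1 = (span B \<inter> cball 0 1) \<inter> sphere 0 1" by auto
  have "compact (span B \<inter> cball 0 1)" by (rule compact_span_cball[OF assms])
  have cs: "closed (sphere (0::'v) 1)"
  proof -
    have "sphere (0::'v) 1 = {y. norm y = 1}" by auto
    moreover have "closed {y::'v. norm y = 1}" by (intro closed_Collect_eq continuous_intros)
    ultimately show ?thesis by simp
  qed
  have "compact ((span B \<inter> cball 0 1) \<inter> sphere 0 1)" by (rule compact_Int_closed[OF \<open>compact (span B \<inter> cball 0 1)\<close> cs])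
  thus ?thesis using e by simp
qed

lemma open_abs_gt:
  fixes p :: "'u::real_normed_vector \<Rightarrow> 'v::real_normed_vector \<Rightarrow> real"
  assumes bb: "bounded_bilinear p"
  shows "open {y. a < \<bar>p t y\<bar>}"
proof -
  have bl: "bounded_linear (p t)" using bounded_bilinear.bounded_linear_right[OF bb] .
  have "continuous_on UNIV (p t)" by (rule linear_continuous_on[OF bl])
  hence "continuous_on UNIV (\<lambda>y. \<bar>p t y\<bar>)" by (rule continuous_on_rabs)
  thus ?thesis by (intro open_Collect_less) (auto intro: continuous_intros)
qed

lemma norming_finite:
  fixes p :: "'u::real_normed_vector \<Rightarrow> 'v::real_normed_vector \<Rightarrow> real" and T :: "nat \<Rightarrow> 'u set"
  assumes bb: "bounded_bilinear p" and fin: "finite B"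
    and mono: "\<And>N N'. N \<le> N' \<Longrightarrow> T N \<subseteq> T N'" and z: "\<And>N. 0 \<in> T N"
    and app: "\<And>x \<delta>. x \<in> span B \<Longrightarrow> norm x = 1 \<Longrightarrow> \<delta> > 0 \<Longrightarrow> \<exists>N. \<exists>t\<in>T N. 1 < \<bar>p t x\<bar> + \<delta>"
    and c: "c > 1"
  shows "\<exists>N S. finite S \<and> S \<subseteq> T N \<and> (\<forall>x\<in>span B. \<exists>t\<in>S. norm x \<le> c * \<bar>p t x\<bar>)"
proof -
  let ?K = "span B \<inter> sphere 0 1"
  let ?O = "\<lambda>t. {y. 1/c < \<bar>p t y\<bar>}"
  have cov: "\<exists>N. \<exists>t\<in>T N. x \<in> ?O t" if x: "x \<in> ?K" for x
  proof -
    have pos: "1 - 1/c > 0" using c by simp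
    have "\<exists>N. \<exists>t\<in>T N. 1 < \<bar>p t x\<bar> + (1 - 1/c)" using app[of x "1 - 1/c"] x pos by (simp add: dist_norm)
    then obtain N t where "t \<in> T N" "1 < \<bar>p t x\<bar> + (1 - 1/c)" by blast
    thus ?thesis by auto
  qed
  have "\<exists>N S. finite S \<and> S \<subseteq> T N \<and> ?K \<subseteq> (\<Union>t\<in>S. ?O t)"
    by (rule cover_mono[where Op = ?O and I = T, OF compact_sphere_span[OF fin] open_abs_gt[OF bb] cov mono])
  then obtain N S0 where S0: "finite S0" "S0 \<subseteq> T N" "?K \<subseteq> (\<Union>t\<in>S0. ?O t)"
    by blast
  show ?thesis
  proof (intro exI conjI ballI)
    show "finite (insert 0 S0)" using S0 by simp
    show "insert 0 S0 \<subseteq> T N" using S0 z by simp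
    fix x assume x: "x \<in> span B"
    show "\<exists>t\<in>insert 0 S0. norm x \<le> c * \<bar>p t x\<bar>"
    proof (cases "x = 0")
      case True thus ?thesis by (auto simp: bounded_bilinear.zero_left[OF bb])
    next
      case False
      let ?y = "(1 / norm x) *\<^sub>R x"
      have "?y \<in> ?K" using x False by (simp add: span_scale)
      then obtain t where t: "t \<in> S0" "1/c < \<bar>p t ?y\<bar>" using S0(3) by blast
      have "p t ?y = (1 / norm x) * p t x" by (simp add: bounded_bilinear.scaleR_right[OF bb])
      hence "1/c < \<bar>p t x\<bar> / norm x" using t(2) by simp
      hence "norm x < c * \<bar>p t x\<bar>" using False c by (simp add: field_simps)
      thus ?thesis using t(1) by force
    qed
  qed
qed

lemma norming_finite0:
  fixes p :: "'u::real_normed_vector \<Rightarrow> 'v::real_normed_vector \<Rightarrow> real"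
  assumes bb: "bounded_bilinear p" and fin: "finite B" and z: "0 \<in> T"
    and nz: "\<And>x. x \<in> span B \<Longrightarrow> norm x = 1 \<Longrightarrow> \<exists>t\<in>T. p t x \<noteq> 0"
  shows "\<exists>S C. finite S \<and> S \<subseteq> T \<and> C > 0 \<and> (\<forall>x\<in>span B. \<exists>t\<in>S. norm x \<le> C * \<bar>p t x\<bar>)"
proof -
  let ?K = "span B \<inter> sphere 0 1"
  let ?O = "\<lambda>(t, r::nat). {y. 1 / real (Suc r) < \<bar>p t y\<bar>}"
  let ?I = "\<lambda>N. T \<times> {..N}"
  have op: "open (?O i)" for i
  proof -
    obtain t r where "i = (t, r)" by (cases i)
    thus ?thesis using open_abs_gt[OF bb] by simp
  qed
  have cov: "\<exists>N. \<exists>i\<in>?I N. x \<in> ?O i" if x: "x \<in> ?K" for x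
  proof -
    obtain t where t: "t \<in> T" "p t x \<noteq> 0" using nz x by auto
    then obtain r where "inverse (real (Suc r)) < \<bar>p t x\<bar>" using reals_Archimedean[of "\<bar>p t x\<bar>"] by auto
    hence "(t, r) \<in> ?I r" "x \<in> ?O (t, r)" using t by (auto simp: inverse_eq_divide)
    thus ?thesis by blast
  qed
  have mono: "?I N \<subseteq> ?I N'" if "N \<le> N'" for N N' :: nat using that by (auto intro: order_trans)
  have "\<exists>N S. finite S \<and> S \<subseteq> ?I N \<and> ?K \<subseteq> (\<Union>i\<in>S. ?O i)"
    by (rule cover_mono[where Op = ?O and I = ?I, OF compact_sphere_span[OF fin] op cov mono])
  then obtain N S0 where S0: "finite S0" "S0 \<subseteq> ?I N" "?K \<subseteq> (\<Union>i\<in>S0. ?O i)"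
    by blast
  show ?thesis
  proof (intro exI conjI ballI)
    show "finite (insert 0 (fst ` S0))" using S0 by simp
    show "insert 0 (fst ` S0) \<subseteq> T" using S0 z by auto
    show "real (Suc N) > 0" by simp
    fix x assume x: "x \<in> span B"
    show "\<exists>t\<in>insert 0 (fst ` S0). norm x \<le> real (Suc N) * \<bar>p t x\<bar>"
    proof (cases "x = 0")
      case True thus ?thesis by (auto simp: bounded_bilinear.zero_left[OF bb])
    next
      case False
      let ?y = "(1 / norm x) *\<^sub>R x"
      have "?y \<in> ?K" using x False by (simp add: span_scale)
      then obtain t r where t: "(t, r) \<in> S0" "1 / real (Suc r) < \<bar>p t ?y\<bar>" using S0(3) by blast
      have "r \<le> N" using t(1) S0(2) by auto
      hence "1 / real (Suc N) \<le> 1 / real (Suc r)" by (simp add: frac_le)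
      moreover have "p t ?y = (1 / norm x) * p t x" by (simp add: bounded_bilinear.scaleR_right[OF bb])
      ultimately have "1 / real (Suc N) < \<bar>p t x\<bar> / norm x" using t(2) by simp
      hence "norm x < real (Suc N) * \<bar>p t x\<bar>" using False by (simp add: field_simps)
      moreover have "t \<in> fst ` S0" using t(1) by force
      ultimately show ?thesis by force
    qed
  qed
qed

lemma lin_sum:
  assumes lin: "lin_functional_on S e" and sS: "subspace S" and fin: "finite A" and AS: "A \<subseteq> S"
  shows "e (\<Sum>b\<in>A. f b *\<^sub>R b) = (\<Sum>b\<in>A. f b * e b)"
  using fin AS
proof (induction A rule: finite_induct)
  case empty
  have "e 0 = 0" using lin_zero[OF lin subspace_0[OF sS]] .
  thus ?case by simp
next
  case (insert a A)
  have aS: "a \<in> S" using insert.prems by simp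
  have sumS: "(\<Sum>b\<in>A. f b *\<^sub>R b) \<in> S" using insert.prems
    by (intro subspace_sum[OF sS] subspace_scale[OF sS]) auto
  have faS: "f a *\<^sub>R a \<in> S" by (rule subspace_scale[OF sS aS])
  have "e (\<Sum>b\<in>insert a A. f b *\<^sub>R b) = e (f a *\<^sub>R a + (\<Sum>b\<in>A. f b *\<^sub>R b))"
    using insert.hyps by simp
  also have "\<dots> = e (f a *\<^sub>R a) + e (\<Sum>b\<in>A. f b *\<^sub>R b)"
    using lin faS sumS unfolding lin_functional_on_def by blast
  also have "e (f a *\<^sub>R a) = f a * e a" using lin aS unfolding lin_functional_on_def by blast
  finally show ?case using insert by simp
qed

lemma dual_ext:
  fixes p :: "'u::real_normed_vector \<Rightarrow> 'v::real_normed_vector \<Rightarrow> real"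
  assumes bb: "bounded_bilinear p" and finB: "finite B" and finT: "finite T"
    and Tn: "\<And>t. t \<in> T \<Longrightarrow> norm t \<le> 1" and TW: "T \<subseteq> W" and sW: "subspace W"
    and norming: "\<And>x. x \<in> span B \<Longrightarrow> \<exists>t\<in>T. norm x \<le> c * \<bar>p t x\<bar>"
    and lin: "lin_functional_on (span B) e"
    and bd: "\<And>x. x \<in> span B \<Longrightarrow> \<bar>e x\<bar> \<le> M * norm x"
    and c0: "c \<ge> 0" and M0: "M \<ge> 0"
  shows "\<exists>w\<in>W. norm w \<le> c * M \<and> (\<forall>x\<in>span B. p w x = e x)"
proof -
  let ?H = "convex hull (T \<union> uminus ` T)"
  let ?C = "(\<lambda>u. (c * M) *\<^sub>R u) ` ?H"
  have cH: "compact ?H" by (intro finite_imp_compact_convex_hull) (simp add: finT)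
  have cC: "compact ?C" using compact_scaling[OF cH] .
  have convC: "convex ?C" by (intro convex_scaling convex_convex_hull)
  have Hn: "?H \<subseteq> cball 0 1"
    by (rule hull_minimal) (auto simp: Tn)
  have HW: "?H \<subseteq> W"
    by (rule hull_minimal) (use TW subspace_neg[OF sW] subspace_imp_convex[OF sW] in auto)
  have Cn: "norm w \<le> c * M \<and> w \<in> W" if wC: "w \<in> ?C" for w
  proof -
    obtain u where u: "u \<in> ?H" "w = (c * M) *\<^sub>R u" using wC by blast
    have "norm u \<le> 1" using Hn u(1) by auto
    hence "norm w \<le> c * M" using u(2) c0 M0 by (simp add: mult_left_le)
    moreover have "w \<in> W" using u HW subspace_scale[OF sW] by auto
    ultimately show ?thesis by simp
  qed
  have z0: "(0::'v) \<in> span B" by (simp add: span_zero)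
  obtain t0 where t0: "t0 \<in> T" using norming[OF z0] by blast
  have "t0 \<in> ?H" using t0 hull_subset[of "T \<union> uminus ` T" convex] by blast
  hence "?H \<noteq> {}" by (metis empty_iff)
  hence Cne: "?C \<noteq> {}" by simp
  define Q where "Q w = (\<Sum>b\<in>B. (p w b - e b)^2)" for w
  have contl: "continuous_on ?C (\<lambda>w. p w b)" for b
    by (rule linear_continuous_on[OF bounded_bilinear.bounded_linear_left[OF bb]])
  have contQ: "continuous_on ?C Q" unfolding Q_def
    by (intro continuous_on_sum continuous_on_power continuous_on_diff continuous_on_const contl)
  obtain w0 where w0: "w0 \<in> ?C" "\<And>w. w \<in> ?C \<Longrightarrow> Q w0 \<le> Q w"
    using continuous_attains_inf[OF cC Cne contQ] by blast
  have lin0: "e 0 = 0" using lin_zero[OF lin z0] .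
  have lscale: "e (a *\<^sub>R y) = a * e y" if "y \<in> span B" for a y
    using lin that unfolding lin_functional_on_def by blast
  have ladd: "e (y + z) = e y + e z" if "y \<in> span B" "z \<in> span B" for y z
    using lin that unfolding lin_functional_on_def by blast
  show ?thesis
  proof (cases "Q w0 = 0")
    case True
    have eqb: "p w0 b = e b" if b: "b \<in> B" for b
    proof -
      have "\<forall>b\<in>B. (p w0 b - e b)^2 = 0" using True finB unfolding Q_def
        by (subst sum_nonneg_eq_0_iff[symmetric]) auto
      thus ?thesis using b by simp
    qed
    have all: "x \<in> span B \<and> p w0 x = e x" if x: "x \<in> span B" for x
      using x
    proof (induction rule: span_induct_alt)
      case base
      show ?case using z0 lin0 bounded_bilinear.zero_right[OF bb] by simp
    next
      case (step a x y)
      have xB: "x \<in> span B" using step.hyps(1) by (simp add: span_base)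
      have axB: "a *\<^sub>R x \<in> span B" using xB by (simp add: span_scale)
      have "p w0 (a *\<^sub>R x + y) = a * p w0 x + p w0 y"
        by (simp add: bounded_bilinear.add_right[OF bb] bounded_bilinear.scaleR_right[OF bb])
      also have "\<dots> = a * e x + e y" using eqb[OF step.hyps(1)] step.IH by simp
      also have "\<dots> = e (a *\<^sub>R x + y)" using ladd[OF axB] lscale[OF xB] step.IH by simp
      finally show ?case using axB step.IH by (simp add: span_add)
    qed
    show ?thesis using Cn[OF w0(1)] all by blast
  next
    case False
    have "Q w0 \<ge> 0" unfolding Q_def by (intro sum_nonneg) simp
    hence Qpos: "Q w0 > 0" using False by simp
    define r where "r b = p w0 b - e b" for b
    define x where "x = - (\<Sum>b\<in>B. r b *\<^sub>R b)"
    have sumin: "(\<Sum>b\<in>B. r b *\<^sub>R b) \<in> span B"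
      by (intro span_sum span_scale span_base)
    have xin: "x \<in> span B" unfolding x_def using sumin by (rule span_neg)
    have ex: "e x = - (\<Sum>b\<in>B. r b * e b)"
    proof -
      have "e x = e ((-1) *\<^sub>R (\<Sum>b\<in>B. r b *\<^sub>R b))" unfolding x_def by simp
      also have "\<dots> = - e (\<Sum>b\<in>B. r b *\<^sub>R b)" using lscale[OF sumin, of "-1"] by simp
      also have "e (\<Sum>b\<in>B. r b *\<^sub>R b) = (\<Sum>b\<in>B. r b * e b)"
        by (rule lin_sum[OF lin subspace_span finB span_superset])
      finally show ?thesis .
    qed
    have px: "p w x = - (\<Sum>b\<in>B. r b * p w b)" for w
      unfolding x_def
      by (simp add: bounded_bilinear.minus_right[OF bb] bounded_bilinear.sum_right[OF bb]
          bounded_bilinear.scaleR_right[OF bb])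
    have key: "e x - p w0 x = Q w0"
    proof -
      have "e x - p w0 x = (\<Sum>b\<in>B. r b * p w0 b) - (\<Sum>b\<in>B. r b * e b)" using ex px[of w0] by simp
      also have "\<dots> = (\<Sum>b\<in>B. r b * (p w0 b - e b))"
        by (simp add: sum_subtractf right_diff_distrib)
      also have "\<dots> = Q w0" unfolding Q_def r_def by (simp add: power2_eq_square)
      finally show ?thesis .
    qed
    have var: "p w x \<le> p w0 x" if w: "w \<in> ?C" for w
    proof (rule ccontr)
      assume nle: "\<not> p w x \<le> p w0 x"
      define d where "d b = p w b - p w0 b" for b
      define D where "D = (\<Sum>b\<in>B. r b * d b)"
      define E where "E = (\<Sum>b\<in>B. (d b)^2)"
      have "p w x - p w0 x = - D" unfolding px D_def d_def
        by (simp add: sum_subtractf right_diff_distrib)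
      hence Dneg: "D < 0" using nle by simp
      have E0: "E \<ge> 0" unfolding E_def by (intro sum_nonneg) simp
      define s where "s = min 1 (-D / (E + 1))"
      have s0: "0 < s" using Dneg E0 unfolding s_def by (simp add: divide_neg_pos)
      have s1: "s \<le> 1" unfolding s_def by simp
      have sE: "s * E < -D"
      proof -
        have "s * E \<le> (-D / (E + 1)) * E" unfolding s_def using E0 by (intro mult_right_mono) auto
        also have "\<dots> = -D * (E / (E + 1))" by simp
        also have "\<dots> < -D * 1"
          using Dneg E0 by (intro mult_strict_left_mono) (auto simp: field_simps)
        finally show ?thesis by simp
      qed
      define ws where "ws = (1 - s) *\<^sub>R w0 + s *\<^sub>R w"
      have wsC: "ws \<in> ?C" unfolding ws_def using convexD[OF convC w0(1) w] s0 s1 by simp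
      have pws: "p ws b - e b = r b + s * d b" for b
      proof -
        have "p ws b = (1 - s) * p w0 b + s * p w b" unfolding ws_def
          by (simp only: bounded_bilinear.add_left[OF bb] bounded_bilinear.scaleR_left[OF bb] real_scaleR_def)
        thus ?thesis unfolding r_def d_def by (simp add: algebra_simps)
      qed
      have "Q ws = (\<Sum>b\<in>B. (r b + s * d b)^2)" unfolding Q_def using pws by simp
      also have "\<dots> = (\<Sum>b\<in>B. (r b)^2 + 2 * s * (r b * d b) + s^2 * (d b)^2)"
        by (simp add: power2_eq_square algebra_simps)
      also have "\<dots> = Q w0 + 2 * s * D + s^2 * E"
        unfolding Q_def D_def E_def r_def
        by (simp add: sum.distrib sum_distrib_left)
      finally have Qws: "Q ws = Q w0 + 2 * s * D + s^2 * E" .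
      have "2 * s * D + s^2 * E = s * (2 * D + s * E)" by (simp add: power2_eq_square algebra_simps)
      also have "\<dots> < 0" using s0 sE Dneg by (intro mult_pos_neg) auto
      finally have "Q ws < Q w0" using Qws by simp
      thus False using w0(2)[OF wsC] by simp
    qed
    obtain t where t: "t \<in> T" "norm x \<le> c * \<bar>p t x\<bar>" using norming[OF xin] by blast
    define w where "w = (c * M) *\<^sub>R (if p t x \<ge> 0 then t else -t)"
    have sub: "T \<union> uminus ` T \<subseteq> ?H" by (rule hull_subset)
    have "t \<in> ?H" using t(1) sub by blast
    moreover have "-t \<in> ?H" using imageI[OF t(1), of uminus] sub by blast
    ultimately have "(if p t x \<ge> 0 then t else -t) \<in> ?H" by simp
    hence wC: "w \<in> ?C" unfolding w_def by (rule imageI)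
    have pw: "p w x = c * M * \<bar>p t x\<bar>"
      unfolding w_def by (simp add: bounded_bilinear.scaleR_left[OF bb] bounded_bilinear.minus_left[OF bb])
    have "e x \<le> M * norm x" using bd[OF xin] by simp
    also have "\<dots> \<le> M * (c * \<bar>p t x\<bar>)" using t(2) M0 by (rule mult_left_mono)
    also have "\<dots> = p w x" using pw by simp
    also have "\<dots> \<le> p w0 x" by (rule var[OF wC])
    finally show ?thesis using key Qpos by simp
  qed
qed

lemma span_UN_fin:
  fixes A :: "nat \<Rightarrow> 'v::real_vector set"
  assumes "x \<in> span (\<Union>k\<in>{1..}. A k)" shows "\<exists>N. x \<in> span (\<Union>k\<in>{1..N}. A k)"
  using assms
proof (induction rule: span_induct_alt)
  case base show ?case using span_zero by blast
next
  case (step c a y)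
  obtain k where k: "k \<ge> 1" "a \<in> A k" using step.hyps(1) by auto
  obtain N where N: "y \<in> span (\<Union>k\<in>{1..N}. A k)" using step.IH by blast
  let ?M = "max k N"
  have "k \<in> {1..?M}" using k(1) by simp
  hence "a \<in> (\<Union>k\<in>{1..?M}. A k)" using k(2) by blast
  hence "a \<in> span (\<Union>k\<in>{1..?M}. A k)" by (rule span_base)
  moreover have "(\<Union>k\<in>{1..N}. A k) \<subseteq> (\<Union>k\<in>{1..?M}. A k)" by (rule UN_mono) auto
  hence "y \<in> span (\<Union>k\<in>{1..?M}. A k)" using N span_mono by blast
  ultimately have "c *\<^sub>R a + y \<in> span (\<Union>k\<in>{1..?M}. A k)" by (simp add: span_add span_scale)
  thus ?case by blast
qed

lemma span_UN_span: "span (\<Union>i\<in>I. span (A i)) = span (\<Union>i\<in>I. A i)"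
proof
  show "span (\<Union>i\<in>I. span (A i)) \<subseteq> span (\<Union>i\<in>I. A i)"
  proof (rule span_minimal)
    show "(\<Union>i\<in>I. span (A i)) \<subseteq> span (\<Union>i\<in>I. A i)"
      using span_mono[of "A i" "\<Union>i\<in>I. A i" for i] by blast
  qed simp
  show "span (\<Union>i\<in>I. A i) \<subseteq> span (\<Union>i\<in>I. span (A i))"
    by (rule span_mono) (use span_superset in blast)
qed

lemma subspace_biorth: "subspace (biorth E k)"
  unfolding subspace_def biorth_def by (auto simp: blinfun.bilinear_simps)

lemma lin_blinfun: "lin_functional_on S (blinfun_apply f)"
  by (simp add: lin_functional_on_def blinfun.bilinear_simps)

lemma lin_eval: "lin_functional_on S (\<lambda>g. blinfun_apply g y)"
  by (simp add: lin_functional_on_def blinfun.bilinear_simps)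

lemma bb_eval: "bounded_bilinear (\<lambda>y (g::'a::real_normed_vector \<Rightarrow>\<^sub>L real). blinfun_apply g y)"
  by (rule bounded_bilinear.flip[OF bounded_bilinear_blinfun_apply])

locale fmd =
  fixes E' :: "nat \<Rightarrow> 'a::banach set"
  assumes fmd: "FMD E'"
begin

lemma fmd1: "\<forall>k\<ge>1. fin_dim_subspace (E' k)"
  using fmd unfolding FMD_def by (rule conjunct1)

lemma fmd2: "closure (span (\<Union>k\<in>{1..}. E' k)) = UNIV"
  using fmd unfolding FMD_def by (rule conjunct2[THEN conjunct1])

lemma fmd4: "\<forall>x. (\<forall>k\<ge>1. \<forall>f\<in>biorth E' k. blinfun_apply f x = 0) \<longrightarrow> x = 0"
  using fmd unfolding FMD_def by (rule conjunct2[THEN conjunct2, THEN conjunct2])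

lemma fdim: assumes "k \<ge> 1" shows "\<exists>B. finite B \<and> E' k = span B"
proof -
  have "fin_dim_subspace (E' k)" using fmd1 assms by simp
  thus ?thesis unfolding fin_dim_subspace_def by (rule conjunct2)
qed

lemma dense: "closure (span (\<Union>k\<in>{1..}. E' k)) = UNIV"
  by (rule fmd2)

lemma tot: "(\<And>k f. k \<ge> 1 \<Longrightarrow> f \<in> biorth E' k \<Longrightarrow> blinfun_apply f x = 0) \<Longrightarrow> x = 0"
  using fmd4 by simp

definition "Bs k = (SOME B. finite B \<and> E' k = span B)"

lemma Bs: "k \<ge> 1 \<Longrightarrow> finite (Bs k) \<and> E' k = span (Bs k)"
  unfolding Bs_def using fdim by (rule someI_ex)

definition ES :: "nat set \<Rightarrow> 'a set" where "ES I = span (\<Union>i\<in>I. E' i)"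
definition FS :: "nat set \<Rightarrow> ('a \<Rightarrow>\<^sub>L real) set" where "FS I = span (\<Union>i\<in>I. biorth E' i)"

lemma biorth_kill: "f \<in> biorth E' i \<Longrightarrow> j \<ge> 1 \<Longrightarrow> j \<noteq> i \<Longrightarrow> x \<in> E' j \<Longrightarrow> blinfun_apply f x = 0"
  by (auto simp: biorth_def)

lemma K1:
  assumes J0: "0 \<notin> J" and IJ: "I \<inter> J = {}" and f: "f \<in> FS I" and x: "x \<in> ES J"
  shows "blinfun_apply f x = 0"
proof -
  have base: "blinfun_apply g x = 0" if g: "g \<in> biorth E' i" "i \<in> I" for g i
    using x unfolding ES_def
  proof (induction rule: span_induct_alt)
    case base show ?case by simp
  next
    case (step c z y)
    obtain j where j: "j \<in> J" "z \<in> E' j" using step.hyps by auto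
    have "j \<ge> 1" using j(1) J0 by (cases j) auto
    moreover have "j \<noteq> i" using j(1) g(2) IJ by auto
    ultimately have "blinfun_apply g z = 0" using biorth_kill[OF g(1) _ _ j(2)] by blast
    thus ?case using step.IH by (simp add: blinfun.bilinear_simps)
  qed
  show ?thesis using f unfolding FS_def
  proof (induction rule: span_induct_alt)
    case base show ?case by simp
  next
    case (step c g y)
    then obtain i where "i \<in> I" "g \<in> biorth E' i" by auto
    thus ?case using base step.IH by (simp add: blinfun.bilinear_simps)
  qed
qed

lemma ES_single: "x \<in> E' i \<Longrightarrow> x \<in> ES {i}"
  unfolding ES_def by (simp add: span_base)

lemma FS_single: "f \<in> biorth E' i \<Longrightarrow> f \<in> FS {i}"
  unfolding FS_def by (simp add: span_base)

lemma zero_bl: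
  assumes kill: "\<And>i x. i \<ge> 1 \<Longrightarrow> x \<in> E' i \<Longrightarrow> blinfun_apply g x = 0"
  shows "g = 0"
proof -
  have "blinfun_apply g x = 0" if "x \<in> span (\<Union>k\<in>{1..}. E' k)" for x
    using that
  proof (induction rule: span_induct_alt)
    case base show ?case by simp
  next
    case (step c z y)
    then obtain k where "k \<ge> 1" "z \<in> E' k" by auto
    thus ?case using kill step.IH by (simp add: blinfun.bilinear_simps)
  qed
  hence sub: "span (\<Union>k\<in>{1..}. E' k) \<subseteq> {x. blinfun_apply g x = 0}" by blast
  have "continuous_on UNIV (blinfun_apply g)"
    by (rule linear_continuous_on[OF blinfun.bounded_linear_right])
  hence cl: "closed {x. blinfun_apply g x = 0}"
    by (intro closed_Collect_eq) (auto intro: continuous_intros)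
  have "closure (span (\<Union>k\<in>{1..}. E' k)) \<subseteq> {x. blinfun_apply g x = 0}"
    by (rule closure_minimal[OF sub cl])
  hence "\<forall>x. blinfun_apply g x = 0" using dense by auto
  thus "g = 0" by (intro blinfun_eqI) simp
qed

lemma K2:
  assumes I0: "0 \<notin> I" and J0: "0 \<notin> J" and IJ: "I \<inter> J = {}" and f: "f \<in> FS (I \<union> J)"
    and kill: "\<And>i x. i \<in> I \<Longrightarrow> x \<in> E' i \<Longrightarrow> blinfun_apply f x = 0"
  shows "f \<in> FS J"
proof -
  have "f \<in> span ((\<Union>i\<in>I. biorth E' i) \<union> (\<Union>i\<in>J. biorth E' i))"
    using f unfolding FS_def by (simp add: UN_Un)
  then obtain u v where uv: "f = u + v" "u \<in> FS I" "v \<in> FS J"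
    unfolding span_Un FS_def by blast
  have "u = 0"
  proof (rule zero_bl)
    fix i x assume i: "i \<ge> 1" "x \<in> E' i"
    have xE: "x \<in> ES {i}" using ES_single[OF i(2)] .
    have i0: "0 \<notin> {i}" using i(1) by auto
    show "blinfun_apply u x = 0"
    proof (cases "i \<in> I")
      case True
      have "J \<inter> {i} = {}" using True IJ by auto
      hence "blinfun_apply v x = 0" using K1[OF i0 _ uv(3) xE] by blast
      moreover have "blinfun_apply f x = 0" using kill True i(2) by blast
      ultimately show ?thesis using uv(1) by (simp add: blinfun.bilinear_simps)
    next
      case False
      hence "I \<inter> {i} = {}" by auto
      thus ?thesis using K1[OF i0 _ uv(2) xE] by blast
    qed
  qed
  thus ?thesis using uv by simp
qed

lemma K3:
  assumes I0: "0 \<notin> I" and J0: "0 \<notin> J" and IJ: "I \<inter> J = {}" and x: "x \<in> ES (I \<union> J)"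
    and kill: "\<And>i f. i \<in> I \<Longrightarrow> f \<in> biorth E' i \<Longrightarrow> blinfun_apply f x = 0"
  shows "x \<in> ES J"
proof -
  have "x \<in> span ((\<Union>i\<in>I. E' i) \<union> (\<Union>i\<in>J. E' i))"
    using x unfolding ES_def by (simp add: UN_Un)
  then obtain u v where uv: "x = u + v" "u \<in> ES I" "v \<in> ES J"
    unfolding span_Un ES_def by blast
  have "u = 0"
  proof (rule tot)
    fix k f assume k: "k \<ge> 1" "f \<in> biorth E' k"
    have fF: "f \<in> FS {k}" using FS_single[OF k(2)] .
    show "blinfun_apply f u = 0"
    proof (cases "k \<in> I")
      case True
      have "{k} \<inter> J = {}" using True IJ by auto
      hence "blinfun_apply f v = 0" using K1[OF J0 _ fF uv(3)] by blast
      moreover have "blinfun_apply f x = 0" using kill True k(2) by blast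
      ultimately show ?thesis using uv(1) by (simp add: blinfun.bilinear_simps)
    next
      case False
      hence "{k} \<inter> I = {}" by auto
      thus ?thesis using K1[OF I0 _ fF uv(2)] by blast
    qed
  qed
  thus ?thesis using uv by simp
qed

lemma biorth_fin:
  assumes i1: "i \<ge> 1"
  shows "\<exists>S. finite S \<and> S \<subseteq> biorth E' i \<and> (\<forall>f. \<exists>w\<in>span S. \<forall>x\<in>E' i. blinfun_apply w x = blinfun_apply f x)"
proof -
  obtain B where B: "finite B" "E' i = span B" using Bs[OF i1] by blast
  let ?T = "biorth E' i \<inter> cball 0 1"
  have z: "0 \<in> ?T" using subspace_0[OF subspace_biorth] by simp
  have nz: "\<exists>t\<in>?T. blinfun_apply t x \<noteq> 0" if x: "x \<in> span B" "norm x = 1" for x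
  proof -
    have "x \<noteq> 0" using x by auto
    then obtain k f where kf: "k \<ge> 1" "f \<in> biorth E' k" "blinfun_apply f x \<noteq> 0"
      using tot by blast
    have "k = i"
    proof (rule ccontr)
      assume "k \<noteq> i"
      hence "blinfun_apply f x = 0" using biorth_kill[OF kf(2) i1] x(1) B(2) by simp
      thus False using kf(3) by simp
    qed
    have fnz: "f \<noteq> 0" using kf(3) by auto
    let ?t = "(1 / norm f) *\<^sub>R f"
    have "?t \<in> biorth E' i" using subspace_scale[OF subspace_biorth] kf(2) \<open>k = i\<close> by blast
    moreover have "norm ?t \<le> 1" using fnz by simp
    moreover have "blinfun_apply ?t x \<noteq> 0" using fnz kf(3) by (simp add: scaleR_blinfun.rep_eq)
    ultimately show ?thesis by auto
  qed
  obtain S C where SC: "finite S" "S \<subseteq> ?T" "C > 0"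
      "\<forall>x\<in>span B. \<exists>t\<in>S. norm x \<le> C * \<bar>blinfun_apply t x\<bar>"
    using norming_finite0[OF bounded_bilinear_blinfun_apply B(1) z nz] by blast
  show ?thesis
  proof (intro exI conjI allI)
    show "finite S" using SC(1) .
    show "S \<subseteq> biorth E' i" using SC(2) by blast
    fix f :: "'a \<Rightarrow>\<^sub>L real"
    have "\<exists>w\<in>span S. norm w \<le> C * norm f \<and> (\<forall>x\<in>span B. blinfun_apply w x = blinfun_apply f x)"
    proof (rule dual_ext[OF bounded_bilinear_blinfun_apply B(1) SC(1)])
      show "\<And>t. t \<in> S \<Longrightarrow> norm t \<le> 1" using SC(2) by auto
      show "S \<subseteq> span S" by (rule span_superset)
      show "subspace (span S)" by simp
      show "\<And>x. x \<in> span B \<Longrightarrow> \<exists>t\<in>S. norm x \<le> C * \<bar>blinfun_apply t x\<bar>" using SC(4) by blast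
      show "lin_functional_on (span B) (blinfun_apply f)" by (rule lin_blinfun)
      show "\<And>x. x \<in> span B \<Longrightarrow> \<bar>blinfun_apply f x\<bar> \<le> norm f * norm x"
        using norm_blinfun[of f] by simp
      show "0 \<le> C" using SC(3) by simp
      show "0 \<le> norm f" by simp
    qed
    thus "\<exists>w\<in>span S. \<forall>x\<in>E' i. blinfun_apply w x = blinfun_apply f x" using B(2) by auto
  qed
qed

lemma biorth_span: assumes i1: "i \<ge> 1" shows "\<exists>S. finite S \<and> biorth E' i = span S"
proof -
  obtain S where S: "finite S" "S \<subseteq> biorth E' i"
      "\<And>f. \<exists>w\<in>span S. \<forall>x\<in>E' i. blinfun_apply w x = blinfun_apply f x"
    using biorth_fin[OF i1] by blast
  have sub: "span S \<subseteq> biorth E' i" by (rule span_minimal[OF S(2) subspace_biorth])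
  have "biorth E' i \<subseteq> span S"
  proof
    fix f assume f: "f \<in> biorth E' i"
    obtain w where w: "w \<in> span S" "\<And>x. x \<in> E' i \<Longrightarrow> blinfun_apply w x = blinfun_apply f x"
      using S(3)[of f] by blast
    have wb: "w \<in> biorth E' i" using w(1) sub by blast
    have "f - w = 0"
    proof (rule zero_bl)
      fix j x assume j: "j \<ge> 1" "x \<in> E' j"
      show "blinfun_apply (f - w) x = 0"
      proof (cases "j = i")
        case True thus ?thesis using w(2) j(2) by (simp add: blinfun.bilinear_simps)
      next
        case False
        thus ?thesis using biorth_kill[OF f j(1) False j(2)] biorth_kill[OF wb j(1) False j(2)]
          by (simp add: blinfun.bilinear_simps)
      qed
    qed
    thus "f \<in> span S" using w(1) by simp
  qed
  thus ?thesis using sub S(1) by blast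
qed

lemma biorth_ext: assumes i1: "i \<ge> 1"
  shows "\<exists>w\<in>biorth E' i. \<forall>x\<in>E' i. blinfun_apply w x = blinfun_apply f x"
proof -
  obtain S where S: "finite S" "S \<subseteq> biorth E' i"
      "\<And>f. \<exists>w\<in>span S. \<forall>x\<in>E' i. blinfun_apply w x = blinfun_apply f x"
    using biorth_fin[OF i1] by blast
  have sub: "span S \<subseteq> biorth E' i" by (rule span_minimal[OF S(2) subspace_biorth])
  thus ?thesis using S(3)[of f] by blast
qed

definition "Ss k = (SOME S. finite S \<and> biorth E' k = span S)"

lemma Ss: "k \<ge> 1 \<Longrightarrow> finite (Ss k) \<and> biorth E' k = span (Ss k)"
  unfolding Ss_def using biorth_span by (rule someI_ex)

lemma ES_fin: assumes "0 \<notin> I" "finite I" shows "finite (\<Union>i\<in>I. Bs i) \<and> ES I = span (\<Union>i\<in>I. Bs i)"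
proof
  have b: "i \<in> I \<Longrightarrow> finite (Bs i) \<and> E' i = span (Bs i)" for i
    using Bs[of i] assms(1) by (cases i) auto
  show "finite (\<Union>i\<in>I. Bs i)" using b assms(2) by auto
  have e: "(\<Union>i\<in>I. E' i) = (\<Union>i\<in>I. span (Bs i))" by (intro SUP_cong refl) (use b in blast)
  have "ES I = span (\<Union>i\<in>I. span (Bs i))" unfolding ES_def e ..
  thus "ES I = span (\<Union>i\<in>I. Bs i)" by (simp add: span_UN_span)
qed

lemma FS_fin: assumes "0 \<notin> I" "finite I" shows "finite (\<Union>i\<in>I. Ss i) \<and> FS I = span (\<Union>i\<in>I. Ss i)"
proof
  have b: "i \<in> I \<Longrightarrow> finite (Ss i) \<and> biorth E' i = span (Ss i)" for i
    using Ss[of i] assms(1) by (cases i) auto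
  show "finite (\<Union>i\<in>I. Ss i)" using b assms(2) by auto
  have e: "(\<Union>i\<in>I. biorth E' i) = (\<Union>i\<in>I. span (Ss i))" by (intro SUP_cong refl) (use b in blast)
  have "FS I = span (\<Union>i\<in>I. span (Ss i))" unfolding FS_def e ..
  thus "FS I = span (\<Union>i\<in>I. Ss i)" by (simp add: span_UN_span)
qed

lemma ES_mono: "I \<subseteq> J \<Longrightarrow> ES I \<subseteq> ES J"
  unfolding ES_def by (intro span_mono) blast

lemma FS_mono: "I \<subseteq> J \<Longrightarrow> FS I \<subseteq> FS J"
  unfolding FS_def by (intro span_mono) blast

end

definition blk :: "(nat \<Rightarrow> nat) \<Rightarrow> nat \<Rightarrow> nat set" where "blk nu j = {nu (j - 1)<..nu j}"

lemma blk_interval: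
  assumes sm: "strict_mono nu" and n0: "nu 0 = 0"
  shows "(\<Union>j\<in>{a..b} - {0}. blk nu j) = {nu (a - 1)<..nu b}"
proof
  have mono: "x \<le> y \<Longrightarrow> nu x \<le> nu y" for x y using strict_mono_mono[OF sm] by (simp add: monoD)
  show "(\<Union>j\<in>{a..b} - {0}. blk nu j) \<subseteq> {nu (a - 1)<..nu b}"
  proof
    fix i assume "i \<in> (\<Union>j\<in>{a..b} - {0}. blk nu j)"
    then obtain j where j1: "j \<in> {a..b} - {0}" and j2: "i \<in> blk nu j" by blast
    have j: "a \<le> j" "j \<le> b" "j \<noteq> 0" "nu (j - 1) < i" "i \<le> nu j"
      using j1 j2 unfolding blk_def by auto
    have "nu (a - 1) \<le> nu (j - 1)" using j(1) by (intro mono) simp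
    moreover have "nu j \<le> nu b" using j(2) by (rule mono)
    ultimately show "i \<in> {nu (a - 1)<..nu b}" using j by simp
  qed
  show "{nu (a - 1)<..nu b} \<subseteq> (\<Union>j\<in>{a..b} - {0}. blk nu j)"
  proof
    fix i assume i: "i \<in> {nu (a - 1)<..nu b}"
    define j where "j = (LEAST j. i \<le> nu j)"
    have ib: "i \<le> nu b" using i by simp
    have ij: "i \<le> nu j" unfolding j_def by (rule LeastI[where P="\<lambda>j. i \<le> nu j", OF ib])
    have jb: "j \<le> b" unfolding j_def by (rule Least_le[where P="\<lambda>j. i \<le> nu j", OF ib])
    have ipos: "i > 0" using i by simp
    have j0: "j \<noteq> 0"
    proof
      assume "j = 0" thus False using ij ipos n0 by simp
    qed
    have lt: "nu (j - 1) < i"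
    proof -
      have "j - 1 < j" using j0 by simp
      hence "\<not> i \<le> nu (j - 1)" unfolding j_def by (rule not_less_Least)
      thus ?thesis by simp
    qed
    have ja: "a \<le> j"
    proof (rule ccontr)
      assume "\<not> a \<le> j"
      hence "j \<le> a - 1" by simp
      hence "nu j \<le> nu (a - 1)" by (rule mono)
      thus False using ij i by simp
    qed
    show "i \<in> (\<Union>j\<in>{a..b} - {0}. blk nu j)"
      unfolding blk_def using ja jb j0 lt ij by auto
  qed
qed

lemma blk_cover:
  assumes sm: "strict_mono nu" and n0: "nu 0 = 0" and i: "i \<ge> 1"
  shows "\<exists>j\<ge>1. i \<in> blk nu j"
proof -
  have "i \<le> nu i" using strict_mono_imp_increasing[OF sm] by simp
  hence "i \<in> {nu (1 - 1)<..nu i}" using n0 i by simp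
  hence "i \<in> (\<Union>j\<in>{1..i} - {0}. blk nu j)" using blk_interval[OF sm n0, of 1 i] by simp
  thus ?thesis by auto
qed

lemma blk_disj:
  assumes sm: "strict_mono nu" and "j \<noteq> j'"
  shows "blk nu j \<inter> blk nu j' = {}"
proof -
  have mono: "x \<le> y \<Longrightarrow> nu x \<le> nu y" for x y using strict_mono_mono[OF sm] by (simp add: monoD)
  have *: "blk nu j \<inter> blk nu j' = {}" if "j < j'" for j j'
  proof -
    have "nu j \<le> nu (j' - 1)" using that by (intro mono) simp
    thus ?thesis unfolding blk_def by auto
  qed
  show ?thesis using assms(2) *[of j j'] *[of j' j] by (cases "j < j'") (auto simp: Int_commute)
qed

lemma blk_0: "0 \<notin> blk nu j" unfolding blk_def by auto

lemma blk_fin: "finite (blk nu j)" unfolding blk_def by simp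

locale blocked = fmd E' for E' :: "nat \<Rightarrow> 'a::banach set" +
  fixes nu :: "nat \<Rightarrow> nat"
  assumes sm: "strict_mono nu" and n0: "nu 0 = 0"
begin

definition Eb :: "nat \<Rightarrow> 'a set" where "Eb j = (if j = 0 then {0} else ES (blk nu j))"

lemma kill_closure:
  assumes "\<And>y. y \<in> S \<Longrightarrow> blinfun_apply g y = 0" "x \<in> closure S"
  shows "blinfun_apply g x = 0"
proof -
  have "continuous_on UNIV (blinfun_apply g)"
    by (rule linear_continuous_on[OF blinfun.bounded_linear_right])
  hence cl: "closed {x. blinfun_apply g x = 0}"
    by (intro closed_Collect_eq) (auto intro: continuous_intros)
  have "closure S \<subseteq> {x. blinfun_apply g x = 0}" using assms(1) by (intro closure_minimal[OF _ cl]) auto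
  thus ?thesis using assms(2) by auto
qed

lemma span_Eb: "span (\<Union>j\<in>J. Eb j) = ES (\<Union>j\<in>J - {0}. blk nu j)"
proof
  show "span (\<Union>j\<in>J. Eb j) \<subseteq> ES (\<Union>j\<in>J - {0}. blk nu j)"
  proof (rule span_minimal)
    show "(\<Union>j\<in>J. Eb j) \<subseteq> ES (\<Union>j\<in>J - {0}. blk nu j)"
    proof
      fix x assume "x \<in> (\<Union>j\<in>J. Eb j)"
      then obtain j where j: "j \<in> J" "x \<in> Eb j" by blast
      show "x \<in> ES (\<Union>j\<in>J - {0}. blk nu j)"
      proof (cases "j = 0")
        case True thus ?thesis using j unfolding Eb_def ES_def by (simp add: span_zero)
      next
        case False
        hence "x \<in> ES (blk nu j)" using j unfolding Eb_def by simp
        moreover have "ES (blk nu j) \<subseteq> ES (\<Union>j\<in>J - {0}. blk nu j)" using j(1) False by (intro ES_mono) blast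
        ultimately show ?thesis by blast
      qed
    qed
    show "subspace (ES (\<Union>j\<in>J - {0}. blk nu j))" unfolding ES_def by simp
  qed
  show "ES (\<Union>j\<in>J - {0}. blk nu j) \<subseteq> span (\<Union>j\<in>J. Eb j)"
    unfolding ES_def
  proof (rule span_mono)
    show "(\<Union>i\<in>(\<Union>j\<in>J - {0}. blk nu j). E' i) \<subseteq> (\<Union>j\<in>J. Eb j)"
    proof
      fix x assume "x \<in> (\<Union>i\<in>(\<Union>j\<in>J - {0}. blk nu j). E' i)"
      then obtain j i where ji: "j \<in> J" "j \<noteq> 0" "i \<in> blk nu j" "x \<in> E' i" by blast
      have "x \<in> ES (blk nu j)" unfolding ES_def using ji(3,4) by (intro span_base) blast
      thus "x \<in> (\<Union>j\<in>J. Eb j)" using ji unfolding Eb_def by auto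
    qed
  qed
qed

lemma biorth_sub: assumes i: "i \<in> blk nu j" shows "biorth E' i \<subseteq> biorth Eb j"
proof
  fix f assume f: "f \<in> biorth E' i"
  show "f \<in> biorth Eb j" unfolding biorth_def
  proof (intro CollectI allI impI ballI)
    fix j' x assume j': "j' \<ge> 1" "j' \<noteq> j" "x \<in> Eb j'"
    have xE: "x \<in> ES (blk nu j')" using j' unfolding Eb_def by simp
    have "{i} \<inter> blk nu j' = {}" using blk_disj[OF sm j'(2)[symmetric]] i by auto
    thus "blinfun_apply f x = 0" using K1[OF blk_0 _ FS_single[OF f] xE] by blast
  qed
qed

lemma biorth_Eb: assumes j: "j \<ge> 1" shows "biorth Eb j = FS (blk nu j)"
proof
  show "FS (blk nu j) \<subseteq> biorth Eb j" unfolding FS_def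
    by (rule span_minimal[OF _ subspace_biorth]) (use biorth_sub in blast)
  show "biorth Eb j \<subseteq> FS (blk nu j)"
  proof
    fix f assume f: "f \<in> biorth Eb j"
    have "\<exists>w. w \<in> biorth E' i \<and> (\<forall>x\<in>E' i. blinfun_apply w x = blinfun_apply f x)" if "i \<in> blk nu j" for i
    proof -
      have "i \<ge> 1" using that blk_0[of nu j] by (cases i) auto
      thus ?thesis using biorth_ext by blast
    qed
    then obtain W where W: "\<And>i. i \<in> blk nu j \<Longrightarrow> W i \<in> biorth E' i \<and> (\<forall>x\<in>E' i. blinfun_apply (W i) x = blinfun_apply f x)"
      by metis
    define w where "w = (\<Sum>i\<in>blk nu j. W i)"
    have wF: "w \<in> FS (blk nu j)" unfolding w_def FS_def
      by (intro span_sum span_base) (use W in blast)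
    have "f - w = 0"
    proof (rule zero_bl)
      fix i' x assume i': "i' \<ge> 1" "x \<in> E' i'"
      show "blinfun_apply (f - w) x = 0"
      proof (cases "i' \<in> blk nu j")
        case True
        have "blinfun_apply (W i) x = (if i = i' then blinfun_apply f x else 0)" if "i \<in> blk nu j" for i
        proof (cases "i = i'")
          case True thus ?thesis using W[OF that] i'(2) by simp
        next
          case False
          thus ?thesis using biorth_kill[of "W i" i i' x] W[OF that] i' by auto
        qed
        hence "blinfun_apply w x = (\<Sum>i\<in>blk nu j. (if i = i' then blinfun_apply f x else 0))"
          unfolding w_def by (simp add: blinfun.sum_left)
        also have "\<dots> = blinfun_apply f x" using True blk_fin[of nu j] by simp
        finally show ?thesis by (simp add: blinfun.bilinear_simps)
      next
        case False
        obtain j' where j': "j' \<ge> 1" "i' \<in> blk nu j'" using blk_cover[OF sm n0 i'(1)] by blast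
        have jj: "j' \<noteq> j" using False j' by auto
        have "x \<in> Eb j'" unfolding Eb_def ES_def using j' i'(2) by (auto intro: span_base)
        hence fx: "blinfun_apply f x = 0" using f j' jj unfolding biorth_def by blast
        have "blk nu j \<inter> {i'} = {}" using False by auto
        hence "blinfun_apply w x = 0" using K1[of "{i'}" "blk nu j" w x] wF ES_single[OF i'(2)] i'(1) by auto
        thus ?thesis using fx by (simp add: blinfun.bilinear_simps)
      qed
    qed
    thus "f \<in> FS (blk nu j)" using wF by simp
  qed
qed

lemma span_Fb: "span (\<Union>j\<in>J. biorth0 Eb j) = FS (\<Union>j\<in>J - {0}. blk nu j)"
proof
  show "span (\<Union>j\<in>J. biorth0 Eb j) \<subseteq> FS (\<Union>j\<in>J - {0}. blk nu j)"
  proof (rule span_minimal)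
    show "(\<Union>j\<in>J. biorth0 Eb j) \<subseteq> FS (\<Union>j\<in>J - {0}. blk nu j)"
    proof
      fix x assume "x \<in> (\<Union>j\<in>J. biorth0 Eb j)"
      then obtain j where j: "j \<in> J" "x \<in> biorth0 Eb j" by blast
      show "x \<in> FS (\<Union>j\<in>J - {0}. blk nu j)"
      proof (cases "j = 0")
        case True thus ?thesis using j unfolding biorth0_def FS_def by (simp add: span_zero)
      next
        case False
        hence "x \<in> FS (blk nu j)" using j biorth_Eb[of j] unfolding biorth0_def by simp
        moreover have "FS (blk nu j) \<subseteq> FS (\<Union>j\<in>J - {0}. blk nu j)" using j(1) False by (intro FS_mono) blast
        ultimately show ?thesis by blast
      qed
    qed
    show "subspace (FS (\<Union>j\<in>J - {0}. blk nu j))" unfolding FS_def by simp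
  qed
  show "FS (\<Union>j\<in>J - {0}. blk nu j) \<subseteq> span (\<Union>j\<in>J. biorth0 Eb j)"
    unfolding FS_def
  proof (rule span_mono)
    show "(\<Union>i\<in>(\<Union>j\<in>J - {0}. blk nu j). biorth E' i) \<subseteq> (\<Union>j\<in>J. biorth0 Eb j)"
    proof
      fix x assume "x \<in> (\<Union>i\<in>(\<Union>j\<in>J - {0}. blk nu j). biorth E' i)"
      then obtain j i where ji: "j \<in> J" "j \<noteq> 0" "i \<in> blk nu j" "x \<in> biorth E' i" by blast
      have "x \<in> biorth Eb j" using biorth_sub[OF ji(3)] ji(4) by blast
      thus "x \<in> (\<Union>j\<in>J. biorth0 Eb j)" using ji unfolding biorth0_def by auto
    qed
  qed
qed

lemma FMD_Eb: "FMD Eb"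
  unfolding FMD_def
proof (intro conjI allI impI)
  fix k :: nat assume k: "k \<ge> 1"
  show "fin_dim_subspace (Eb k)"
    unfolding fin_dim_subspace_def Eb_def using k ES_fin[OF blk_0 blk_fin, of nu k]
    by (auto simp: ES_def)
next
  have "span (\<Union>k\<in>{1..}. Eb k) = ES (\<Union>j\<in>{1..} - {0}. blk nu j)" by (rule span_Eb)
  also have "(\<Union>j\<in>{1..} - {0}. blk nu j) = {1..}"
  proof
    show "(\<Union>j\<in>{1..} - {0}. blk nu j) \<subseteq> {1..}" using blk_0 by (force simp: Suc_le_eq)
    show "{1..} \<subseteq> (\<Union>j\<in>{1..} - {0}. blk nu j)" using blk_cover[OF sm n0] by force
  qed
  finally show "closure (span (\<Union>k\<in>{1..}. Eb k)) = UNIV" using dense unfolding ES_def by simp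
next
  fix k :: nat assume k: "k \<ge> 1"
  let ?R = "\<Union>j\<in>({1..} - {k}) - {0}. blk nu j"
  have R0: "0 \<notin> ?R" using blk_0 by blast
  have spR: "span (\<Union>j\<in>{1..} - {k}. Eb j) = ES ?R" by (rule span_Eb)
  show "Eb k \<inter> closure (span (\<Union>j\<in>{1..} - {k}. Eb j)) = {0}"
  proof
    show "{0} \<subseteq> Eb k \<inter> closure (span (\<Union>j\<in>{1..} - {k}. Eb j))"
      using k unfolding Eb_def ES_def by (auto simp: span_zero intro: closure_subset[THEN subsetD])
    show "Eb k \<inter> closure (span (\<Union>j\<in>{1..} - {k}. Eb j)) \<subseteq> {0}"
    proof
      fix x assume x: "x \<in> Eb k \<inter> closure (span (\<Union>j\<in>{1..} - {k}. Eb j))"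
      have xk: "x \<in> ES (blk nu k)" using x k unfolding Eb_def by simp
      have xc: "x \<in> closure (ES ?R)" using x spR by simp
      have "x = 0"
      proof (rule tot)
        fix i f assume i: "i \<ge> 1" "f \<in> biorth E' i"
        show "blinfun_apply f x = 0"
        proof (cases "i \<in> blk nu k")
          case True
          have "{i} \<inter> ?R = {}" using True blk_disj[OF sm] by blast
          hence "\<And>y. y \<in> ES ?R \<Longrightarrow> blinfun_apply f y = 0"
            using K1[OF R0 _ FS_single[OF i(2)]] by blast
          thus ?thesis using kill_closure xc by blast
        next
          case False
          hence "{i} \<inter> blk nu k = {}" by auto
          thus ?thesis using K1[OF blk_0 _ FS_single[OF i(2)] xk] by blast
        qed
      qed
      thus "x \<in> {0}" by simp
    qed
  qed
next
  fix x assume tx: "\<forall>k\<ge>1. \<forall>f\<in>biorth Eb k. blinfun_apply f x = 0"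
  show "x = 0"
  proof (rule tot)
    fix i f assume i: "i \<ge> 1" "f \<in> biorth E' i"
    obtain k where k: "k \<ge> 1" "i \<in> blk nu k" using blk_cover[OF sm n0 i(1)] by blast
    thus "blinfun_apply f x = 0" using tx biorth_sub[OF k(2)] i(2) by blast
  qed
qed

lemma blocking_Eb: "is_blocking E' Eb"
  unfolding is_blocking_def
  by (intro exI[of _ nu]) (auto simp: n0 sm Eb_def ES_def blk_def)

end

lemma dual_norm_bound:
  fixes B :: "'v::real_normed_vector set"
  assumes fin: "finite B" and lin: "lin_functional_on (span B) e"
  shows "dual_norm_on (span B) e \<ge> 0 \<and> (\<forall>x\<in>span B. \<bar>e x\<bar> \<le> dual_norm_on (span B) e * norm x)"
proof -
  obtain M where M: "M \<ge> 0" "\<forall>x\<in>span B. \<bar>e x\<bar> \<le> M * norm x" using lin_bounded[OF fin lin] by blast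
  let ?A = "{\<bar>e x\<bar> | x. x \<in> span B \<and> norm x \<le> 1}"
  have z: "(0::'v) \<in> span B" by (simp add: span_zero)
  have e0: "e 0 = 0" by (rule lin_zero[OF lin z])
  have bdd: "bdd_above ?A"
  proof (rule bdd_aboveI)
    fix a assume "a \<in> ?A"
    then obtain x where x: "a = \<bar>e x\<bar>" "x \<in> span B" "norm x \<le> 1" by blast
    have "\<bar>e x\<bar> \<le> M * norm x" using M(2) x(2) by blast
    also have "\<dots> \<le> M * 1" using x(3) M(1) by (rule mult_left_mono)
    finally show "a \<le> M" using x(1) by simp
  qed
  have D0: "0 \<le> Sup ?A"
  proof (rule cSup_upper2[OF _ _ bdd])
    show "\<bar>e 0\<bar> \<in> ?A" using z by force
    show "0 \<le> \<bar>e 0\<bar>" by simp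
  qed
  have "\<bar>e x\<bar> \<le> Sup ?A * norm x" if x: "x \<in> span B" for x
  proof (cases "x = 0")
    case True thus ?thesis using e0 by simp
  next
    case False
    let ?y = "(1 / norm x) *\<^sub>R x"
    have "?y \<in> span B" using x by (simp add: span_scale)
    moreover have "norm ?y \<le> 1" using False by simp
    ultimately have "\<bar>e ?y\<bar> \<in> ?A" by blast
    hence le: "\<bar>e ?y\<bar> \<le> Sup ?A" using bdd by (rule cSup_upper)
    have "e ?y = (1 / norm x) * e x" using lin x unfolding lin_functional_on_def by blast
    hence "\<bar>e x\<bar> / norm x \<le> Sup ?A" using le by (simp add: abs_mult)
    thus ?thesis using False by (simp add: field_simps)
  qed
  thus ?thesis using D0 unfolding dual_norm_on_def by blast
qed

locale fmdn = fmd E' for E' :: "nat \<Rightarrow> 'a::banach set" +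
  assumes onenorm: "one_norming E'"
begin

definition "cc = (11/10 :: real)"

definition Pa :: "nat \<Rightarrow> nat \<Rightarrow> bool" where
  "Pa M N \<longleftrightarrow> (\<exists>T. finite T \<and> T \<subseteq> FS {1..N} \<and> (\<forall>t\<in>T. norm t \<le> 1) \<and>
      (\<forall>x\<in>ES {1..M}. \<exists>t\<in>T. norm x \<le> cc * \<bar>blinfun_apply t x\<bar>))"

definition Pb :: "nat \<Rightarrow> nat \<Rightarrow> bool" where
  "Pb M N \<longleftrightarrow> (\<exists>Y. finite Y \<and> Y \<subseteq> ES {1..N} \<and> (\<forall>y\<in>Y. norm y \<le> 1) \<and>
      (\<forall>f\<in>FS {1..M}. \<exists>y\<in>Y. norm f \<le> cc * \<bar>blinfun_apply f y\<bar>))"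

lemma Pa_mono: "Pa M N \<Longrightarrow> N \<le> N' \<Longrightarrow> Pa M N'"
  unfolding Pa_def using FS_mono[of "{1..N}" "{1..N'}"] by auto

lemma Pb_mono: "Pb M N \<Longrightarrow> N \<le> N' \<Longrightarrow> Pb M N'"
  unfolding Pb_def using ES_mono[of "{1..N}" "{1..N'}"] by auto

lemma ES_1: "finite (\<Union>i\<in>{1..M}. Bs i) \<and> ES {1..M} = span (\<Union>i\<in>{1..M}. Bs i)"
  by (rule ES_fin) auto

lemma FS_1: "finite (\<Union>i\<in>{1..M}. Ss i) \<and> FS {1..M} = span (\<Union>i\<in>{1..M}. Ss i)"
  by (rule FS_fin) auto

lemma FS_UN: "span (\<Union>k\<in>{1..N}. biorth E' k) = FS {1..N}" unfolding FS_def ..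
lemma ES_UN: "span (\<Union>k\<in>{1..N}. E' k) = ES {1..N}" unfolding ES_def ..

lemma ex_Pa: "\<exists>N. Pa M N"
proof -
  let ?B = "\<Union>i\<in>{1..M}. Bs i"
  have B: "finite ?B" "ES {1..M} = span ?B" using ES_1 by auto
  let ?T = "\<lambda>N. FS {1..N} \<inter> cball 0 1"
  have mono: "?T N \<subseteq> ?T N'" if "N \<le> N'" for N N' using FS_mono[of "{1..N}" "{1..N'}"] that by auto
  have z: "0 \<in> ?T N" for N by (simp add: FS_def span_zero)
  have app: "\<exists>N. \<exists>t\<in>?T N. 1 < \<bar>blinfun_apply t x\<bar> + \<delta>"
    if x: "x \<in> span ?B" "norm x = 1" and d: "\<delta> > 0" for x \<delta>
  proof -
    let ?A = "{blinfun_apply f x | f. f \<in> span (\<Union>k\<in>{1..}. biorth E' k) \<and> norm f \<le> 1}"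
    have le: "norm x \<le> Sup ?A" using onenorm unfolding one_norming_def by blast
    have ne: "?A \<noteq> {}" using span_zero by force
    have bdd: "bdd_above ?A"
    proof (rule bdd_aboveI)
      fix a assume "a \<in> ?A"
      then obtain f where f: "a = blinfun_apply f x" "norm f \<le> 1" by blast
      have "a \<le> norm f * norm x" using f(1) norm_blinfun[of f x] by simp
      also have "\<dots> \<le> 1" using f(2) x(2) by simp
      finally show "a \<le> 1" .
    qed
    have "1 - \<delta> < Sup ?A" using le x(2) d by simp
    then obtain a where a: "a \<in> ?A" "1 - \<delta> < a" using less_cSup_iff[OF ne bdd] by blast
    then obtain f where f: "a = blinfun_apply f x" "f \<in> span (\<Union>k\<in>{1..}. biorth E' k)" "norm f \<le> 1" by blast
    obtain N where N: "f \<in> span (\<Union>k\<in>{1..N}. biorth E' k)" using span_UN_fin[OF f(2)] by blast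
    have "f \<in> ?T N" using N f(3) FS_UN by auto
    moreover have "1 < \<bar>blinfun_apply f x\<bar> + \<delta>" using a f(1) by linarith
    ultimately show ?thesis by blast
  qed
  have c: "cc > 1" unfolding cc_def by simp
  obtain N S where NS: "finite S" "S \<subseteq> ?T N" "\<forall>x\<in>span ?B. \<exists>t\<in>S. norm x \<le> cc * \<bar>blinfun_apply t x\<bar>"
    using norming_finite[OF bounded_bilinear_blinfun_apply B(1) mono z app c] by blast
  have "Pa M N" unfolding Pa_def using NS B(2) by (intro exI[of _ S]) auto
  thus ?thesis by blast
qed

lemma norm_approx:
  fixes f :: "'a \<Rightarrow>\<^sub>L real"
  assumes "e > 0"
  shows "\<exists>x. norm x \<le> 1 \<and> norm f - e < \<bar>blinfun_apply f x\<bar>"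
proof (rule ccontr)
  assume "\<not> ?thesis"
  hence h: "\<And>x. norm x \<le> 1 \<Longrightarrow> \<bar>blinfun_apply f x\<bar> \<le> norm f - e" by (meson not_le)
  have ge: "0 \<le> norm f - e" using h[of 0] by simp
  have "\<bar>blinfun_apply f x\<bar> \<le> (norm f - e) * norm x" for x
  proof (cases "x = 0")
    case True thus ?thesis by simp
  next
    case False
    let ?y = "(1 / norm x) *\<^sub>R x"
    have "\<bar>blinfun_apply f ?y\<bar> \<le> norm f - e" using h False by simp
    hence "\<bar>blinfun_apply f x\<bar> / norm x \<le> norm f - e" by (simp add: blinfun.scaleR_right abs_mult)
    thus ?thesis using False by (simp add: field_simps)
  qed
  hence "norm f \<le> norm f - e" using ge by (intro norm_blinfun_bound) auto
  thus False using assms by simp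
qed

lemma ex_Pb: "\<exists>N. Pb M N"
proof -
  let ?B = "\<Union>i\<in>{1..M}. Ss i"
  have B: "finite ?B" "FS {1..M} = span ?B" using FS_1 by auto
  let ?T = "\<lambda>N. ES {1..N} \<inter> cball 0 1"
  have mono: "?T N \<subseteq> ?T N'" if "N \<le> N'" for N N' using ES_mono[of "{1..N}" "{1..N'}"] that by auto
  have z: "0 \<in> ?T N" for N by (simp add: ES_def span_zero)
  have app: "\<exists>N. \<exists>y\<in>?T N. 1 < \<bar>blinfun_apply f y\<bar> + \<delta>"
    if f: "f \<in> span ?B" "norm f = 1" and d: "\<delta> > 0" for f \<delta>
  proof (cases "\<delta> \<ge> 2")
    case True thus ?thesis using z[of 0] by (intro exI[of _ 0] bexI[of _ 0]) auto
  next
    case False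
    obtain x where x: "norm x \<le> 1" "1 - \<delta>/2 < \<bar>blinfun_apply f x\<bar>"
      using norm_approx[of "\<delta>/2" f] d f(2) by auto
    have "x \<in> closure (span (\<Union>k\<in>{1..}. E' k))" using dense by simp
    then obtain z where zs: "z \<in> span (\<Union>k\<in>{1..}. E' k)" and zd: "dist z x < \<delta>/4"
      using d unfolding closure_approachable by (metis divide_pos_pos zero_less_numeral)
    obtain N where N: "z \<in> span (\<Union>k\<in>{1..N}. E' k)" using span_UN_fin[OF zs] by blast
    have nzx: "norm (z - x) < \<delta>/4" using zd by (simp add: dist_norm)
    have "\<bar>blinfun_apply f (z - x)\<bar> \<le> norm f * norm (z - x)" using norm_blinfun[of f "z - x"] by simp
    hence fzx: "\<bar>blinfun_apply f (z - x)\<bar> < \<delta>/4" using nzx f(2) by simp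
    have "blinfun_apply f z = blinfun_apply f x + blinfun_apply f (z - x)" by (simp add: blinfun.diff_right)
    hence az: "\<bar>blinfun_apply f z\<bar> > 1 - 3*\<delta>/4" using x(2) fzx by linarith
    have nz: "norm z \<le> 1 + \<delta>/4"
    proof -
      have "norm z \<le> norm x + norm (z - x)" by (metis add.commute diff_add_cancel norm_triangle_ineq)
      thus ?thesis using x(1) nzx by linarith
    qed
    let ?k = "1 + \<delta>/4"
    have kpos: "?k > 0" using d by simp
    let ?y = "(1 / ?k) *\<^sub>R z"
    have ny: "norm ?y \<le> 1" using nz kpos by (simp add: field_simps)
    have yN: "?y \<in> ES {1..N}" using N unfolding ES_def by (simp add: span_scale)
    have fy: "\<bar>blinfun_apply f ?y\<bar> = \<bar>blinfun_apply f z\<bar> / ?k"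
      using kpos by (simp add: blinfun.scaleR_right abs_mult)
    have "1 * ?k < \<bar>blinfun_apply f z\<bar> + \<delta> * ?k"
    proof -
      have "1 * ?k = 1 + \<delta>/4" by simp
      moreover have "\<delta> * ?k \<ge> \<delta>" using d by (simp add: field_simps)
      ultimately show ?thesis using az by linarith
    qed
    hence "1 < \<bar>blinfun_apply f z\<bar> / ?k + \<delta>" using kpos by (simp add: field_simps)
    hence "1 < \<bar>blinfun_apply f ?y\<bar> + \<delta>" using fy by simp
    moreover have "?y \<in> ES {1..N} \<inter> cball 0 1" using yN ny by simp
    ultimately show ?thesis by blast
  qed
  have c: "cc > 1" unfolding cc_def by simp
  obtain N S where NS: "finite S" "S \<subseteq> ?T N" "\<forall>f\<in>span ?B. \<exists>y\<in>S. norm f \<le> cc * \<bar>blinfun_apply f y\<bar>"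
    using norming_finite[OF bb_eval B(1) mono z app c] by blast
  have "Pb M N" unfolding Pb_def using NS B(2) by (intro exI[of _ S]) auto
  thus ?thesis by blast
qed


definition PP :: "nat \<Rightarrow> nat \<Rightarrow> bool" where "PP M N \<longleftrightarrow> Pa M N \<and> Pb M N"

lemma ex_PP: "\<exists>N. M < N \<and> PP M N"
proof -
  obtain Na Nb where "Pa M Na" "Pb M Nb" using ex_Pa ex_Pb by blast
  hence "Pa M (max (max Na Nb) (Suc M))" "Pb M (max (max Na Nb) (Suc M))"
    by (auto elim: Pa_mono Pb_mono)
  thus ?thesis unfolding PP_def by (intro exI[of _ "max (max Na Nb) (Suc M)"]) auto
qed

definition nuc :: "nat \<Rightarrow> nat" where "nuc = rec_nat 0 (\<lambda>k m. SOME N. m < N \<and> PP m N)"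

lemma nuc_0: "nuc 0 = 0" by (simp add: nuc_def)

lemma nuc_Suc: "nuc k < nuc (Suc k) \<and> PP (nuc k) (nuc (Suc k))"
proof -
  have "nuc (Suc k) = (SOME N. nuc k < N \<and> PP (nuc k) N)" by (simp add: nuc_def)
  thus ?thesis using someI_ex[OF ex_PP[of "nuc k"]] by simp
qed

lemma nuc_sm: "strict_mono nuc"
  unfolding strict_mono_Suc_iff using nuc_Suc by blast

lemma nuc_mono: "a \<le> b \<Longrightarrow> nuc a \<le> nuc b"
  using strict_mono_mono[OF nuc_sm] by (simp add: monoD)

lemma cc_pos: "cc > 0" unfolding cc_def by simp

lemma ext_low_E:
  assumes m: "m \<ge> 1" and f: "norm f \<le> 1"
  shows "\<exists>g\<in>FS {1..nuc (m - 1)}. norm g \<le> cc \<and> (\<forall>y\<in>ES {1..nuc (m - 1 - 1)}. blinfun_apply g y = blinfun_apply f y)"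
proof (cases "m = 1")
  case True
  have "ES {1..nuc (m - 1 - 1)} = {0}" by (simp add: True nuc_0 ES_def)
  moreover have "(0::'a \<Rightarrow>\<^sub>L real) \<in> FS {1..nuc (m - 1)}" by (simp add: FS_def span_zero)
  ultimately show ?thesis using cc_pos by (intro bexI[of _ 0]) auto
next
  case False
  hence mm: "m - 1 = Suc (m - 1 - 1)" using m by simp
  obtain T where T: "finite T" "T \<subseteq> FS {1..nuc (m - 1)}" "\<forall>t\<in>T. norm t \<le> 1"
      "\<forall>x\<in>ES {1..nuc (m - 1 - 1)}. \<exists>t\<in>T. norm x \<le> cc * \<bar>blinfun_apply t x\<bar>"
    using nuc_Suc[of "m - 1 - 1"] mm unfolding PP_def Pa_def by metis
  let ?B = "\<Union>i\<in>{1..nuc (m - 1 - 1)}. Bs i"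
  have B: "finite ?B" "ES {1..nuc (m - 1 - 1)} = span ?B" using ES_1 by auto
  have "\<exists>w\<in>FS {1..nuc (m - 1)}. norm w \<le> cc * 1 \<and> (\<forall>x\<in>span ?B. blinfun_apply w x = blinfun_apply f x)"
  proof (rule dual_ext[OF bounded_bilinear_blinfun_apply B(1) T(1)])
    show "\<And>t. t \<in> T \<Longrightarrow> norm t \<le> 1" using T(3) by blast
    show "T \<subseteq> FS {1..nuc (m - 1)}" using T(2) .
    show "subspace (FS {1..nuc (m - 1)})" unfolding FS_def by simp
    show "\<And>x. x \<in> span ?B \<Longrightarrow> \<exists>t\<in>T. norm x \<le> cc * \<bar>blinfun_apply t x\<bar>" using T(4) B(2) by blast
    show "lin_functional_on (span ?B) (blinfun_apply f)" by (rule lin_blinfun)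
    show "\<bar>blinfun_apply f x\<bar> \<le> 1 * norm x" for x
    proof -
      have "\<bar>blinfun_apply f x\<bar> \<le> norm f * norm x" using norm_blinfun[of f x] by simp
      also have "\<dots> \<le> 1 * norm x" using f by (intro mult_right_mono) auto
      finally show ?thesis .
    qed
    show "0 \<le> cc" using cc_pos by simp
  qed simp
  thus ?thesis using B(2) by auto
qed

lemma ext_low_F:
  assumes m: "m \<ge> 1" and y: "norm y \<le> 1"
  shows "\<exists>z\<in>ES {1..nuc (m - 1)}. norm z \<le> cc \<and> (\<forall>g\<in>FS {1..nuc (m - 1 - 1)}. blinfun_apply g z = blinfun_apply g y)"
proof (cases "m = 1")
  case True
  have "FS {1..nuc (m - 1 - 1)} = {0}" by (simp add: True nuc_0 FS_def)
  moreover have "(0::'a) \<in> ES {1..nuc (m - 1)}" by (simp add: ES_def span_zero)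
  ultimately show ?thesis using cc_pos by (intro bexI[of _ 0]) auto
next
  case False
  hence mm: "m - 1 = Suc (m - 1 - 1)" using m by simp
  obtain Y where Y: "finite Y" "Y \<subseteq> ES {1..nuc (m - 1)}" "\<forall>y\<in>Y. norm y \<le> 1"
      "\<forall>f\<in>FS {1..nuc (m - 1 - 1)}. \<exists>y\<in>Y. norm f \<le> cc * \<bar>blinfun_apply f y\<bar>"
    using nuc_Suc[of "m - 1 - 1"] mm unfolding PP_def Pb_def by metis
  let ?B = "\<Union>i\<in>{1..nuc (m - 1 - 1)}. Ss i"
  have B: "finite ?B" "FS {1..nuc (m - 1 - 1)} = span ?B" using FS_1 by auto
  have "\<exists>w\<in>ES {1..nuc (m - 1)}. norm w \<le> cc * 1 \<and> (\<forall>g\<in>span ?B. blinfun_apply g w = blinfun_apply g y)"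
  proof (rule dual_ext[OF bb_eval B(1) Y(1)])
    show "\<And>t. t \<in> Y \<Longrightarrow> norm t \<le> 1" using Y(3) by blast
    show "Y \<subseteq> ES {1..nuc (m - 1)}" using Y(2) .
    show "subspace (ES {1..nuc (m - 1)})" unfolding ES_def by simp
    show "\<And>g. g \<in> span ?B \<Longrightarrow> \<exists>t\<in>Y. norm g \<le> cc * \<bar>blinfun_apply g t\<bar>" using Y(4) B(2) by blast
    show "lin_functional_on (span ?B) (\<lambda>g. blinfun_apply g y)" by (rule lin_eval)
    show "\<bar>blinfun_apply g y\<bar> \<le> 1 * norm g" for g
    proof -
      have "\<bar>blinfun_apply g y\<bar> \<le> norm g * norm y" using norm_blinfun[of g y] by simp
      also have "\<dots> \<le> norm g * 1" using y by (intro mult_left_mono) auto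
      finally show ?thesis by simp
    qed
    show "0 \<le> cc" using cc_pos by simp
  qed simp
  thus ?thesis using B(2) by auto
qed

lemma NE:
  assumes m: "1 \<le> m" "m \<le> q"
  shows "\<exists>T'. finite T' \<and> T' \<subseteq> FS {nuc (m - 1 - 1)<..nuc (q + 1)} \<and> (\<forall>t\<in>T'. norm t \<le> 1) \<and>
    (\<forall>x\<in>ES {nuc (m - 1)<..nuc q}. \<exists>t\<in>T'. norm x \<le> cc * (1 + cc) * \<bar>blinfun_apply t x\<bar>)"
proof -
  obtain T where T: "finite T" "T \<subseteq> FS {1..nuc (Suc q)}" "\<forall>t\<in>T. norm t \<le> 1"
      "\<forall>x\<in>ES {1..nuc q}. \<exists>t\<in>T. norm x \<le> cc * \<bar>blinfun_apply t x\<bar>"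
    using nuc_Suc[of q] unfolding PP_def Pa_def by metis
  have "\<forall>f\<in>T. \<exists>g. g \<in> FS {1..nuc (m - 1)} \<and> norm g \<le> cc \<and> (\<forall>y\<in>ES {1..nuc (m - 1 - 1)}. blinfun_apply g y = blinfun_apply f y)"
    using ext_low_E[OF m(1)] T(3) by blast
  then obtain G where G: "\<And>f. f \<in> T \<Longrightarrow> G f \<in> FS {1..nuc (m - 1)} \<and> norm (G f) \<le> cc \<and> (\<forall>y\<in>ES {1..nuc (m - 1 - 1)}. blinfun_apply (G f) y = blinfun_apply f y)"
    by (metis bchoice)
  define T' where "T' = (\<lambda>f. (1 / (1 + cc)) *\<^sub>R (f - G f)) ` T"
  let ?I = "{1..nuc (m - 1 - 1)}" and ?J = "{nuc (m - 1 - 1)<..nuc (q + 1)}"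
  have le1: "nuc (m - 1) \<le> nuc (q + 1)" "nuc (m - 1 - 1) \<le> nuc (q + 1)" using m by (auto intro: nuc_mono)
  have IJ: "?I \<union> ?J = {1..nuc (q + 1)}" using le1 by auto
  have cpos: "1 + cc > 0" using cc_pos by simp
  have mem: "(1 / (1 + cc)) *\<^sub>R (f - G f) \<in> FS ?J \<and> norm ((1 / (1 + cc)) *\<^sub>R (f - G f)) \<le> 1" if f: "f \<in> T" for f
  proof
    have fF: "f \<in> FS {1..nuc (q + 1)}" using T(2) f by auto
    have gF: "G f \<in> FS {1..nuc (q + 1)}" using G[OF f] FS_mono[of "{1..nuc (m - 1)}" "{1..nuc (q + 1)}"] le1 by auto
    have hF: "f - G f \<in> FS (?I \<union> ?J)" using fF gF IJ unfolding FS_def by (simp add: span_diff)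
    have "f - G f \<in> FS ?J"
    proof (rule K2[OF _ _ _ hF])
      show "0 \<notin> ?I" by simp
      show "0 \<notin> ?J" by simp
      show "?I \<inter> ?J = {}" by auto
      fix i x assume i: "i \<in> ?I" "x \<in> E' i"
      have "x \<in> ES ?I" using ES_single[OF i(2)] ES_mono[of "{i}" ?I] i(1) by auto
      thus "blinfun_apply (f - G f) x = 0" using G[OF f] by (simp add: blinfun.bilinear_simps)
    qed
    thus "(1 / (1 + cc)) *\<^sub>R (f - G f) \<in> FS ?J" unfolding FS_def by (simp add: span_scale)
    have "norm (f - G f) \<le> norm f + norm (G f)" by (rule norm_triangle_ineq4)
    also have "\<dots> \<le> 1 + cc" using T(3) f G[OF f] by (intro add_mono) auto
    finally have nle: "norm (f - G f) \<le> 1 + cc" .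
    have "norm ((1 / (1 + cc)) *\<^sub>R (f - G f)) = \<bar>1 / (1 + cc)\<bar> * norm (f - G f)" by (simp only: norm_scaleR)
    also have "\<dots> = norm (f - G f) / (1 + cc)" using cpos by simp
    also have "\<dots> \<le> 1" using nle cpos by simp
    finally show "norm ((1 / (1 + cc)) *\<^sub>R (f - G f)) \<le> 1" .
  qed
  show ?thesis
  proof (intro exI[of _ T'] conjI ballI)
    show "finite T'" unfolding T'_def using T(1) by simp
    show "T' \<subseteq> FS ?J" unfolding T'_def using mem by blast
    show "\<And>t. t \<in> T' \<Longrightarrow> norm t \<le> 1" unfolding T'_def using mem by blast
    fix x assume x: "x \<in> ES {nuc (m - 1)<..nuc q}"
    have "{nuc (m - 1)<..nuc q} \<subseteq> {1..nuc q}" by auto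
    hence "x \<in> ES {1..nuc q}" using x ES_mono by blast
    then obtain f where f: "f \<in> T" "norm x \<le> cc * \<bar>blinfun_apply f x\<bar>" using T(4) by blast
    have "{1..nuc (m - 1)} \<inter> {nuc (m - 1)<..nuc q} = {}" by auto
    hence g0: "blinfun_apply (G f) x = 0" using K1[of "{nuc (m - 1)<..nuc q}" "{1..nuc (m - 1)}" "G f" x] G[OF f(1)] x by auto
    let ?t = "(1 / (1 + cc)) *\<^sub>R (f - G f)"
    have "blinfun_apply ?t x = blinfun_apply f x / (1 + cc)" using g0 by (simp add: blinfun.bilinear_simps)
    hence "cc * (1 + cc) * \<bar>blinfun_apply ?t x\<bar> = cc * \<bar>blinfun_apply f x\<bar>" using cpos by (simp add: abs_div)
    hence "norm x \<le> cc * (1 + cc) * \<bar>blinfun_apply ?t x\<bar>" using f(2) by linarith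
    moreover have "?t \<in> T'" unfolding T'_def using f(1) by blast
    ultimately show "\<exists>t\<in>T'. norm x \<le> cc * (1 + cc) * \<bar>blinfun_apply t x\<bar>" by blast
  qed
qed

lemma NF:
  assumes m: "1 \<le> m" "m \<le> q"
  shows "\<exists>Y'. finite Y' \<and> Y' \<subseteq> ES {nuc (m - 1 - 1)<..nuc (q + 1)} \<and> (\<forall>y\<in>Y'. norm y \<le> 1) \<and>
    (\<forall>f\<in>FS {nuc (m - 1)<..nuc q}. \<exists>y\<in>Y'. norm f \<le> cc * (1 + cc) * \<bar>blinfun_apply f y\<bar>)"
proof -
  obtain Y where Y: "finite Y" "Y \<subseteq> ES {1..nuc (Suc q)}" "\<forall>y\<in>Y. norm y \<le> 1"
      "\<forall>f\<in>FS {1..nuc q}. \<exists>y\<in>Y. norm f \<le> cc * \<bar>blinfun_apply f y\<bar>"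
    using nuc_Suc[of q] unfolding PP_def Pb_def by metis
  have "\<forall>y\<in>Y. \<exists>z. z \<in> ES {1..nuc (m - 1)} \<and> norm z \<le> cc \<and> (\<forall>g\<in>FS {1..nuc (m - 1 - 1)}. blinfun_apply g z = blinfun_apply g y)"
    using ext_low_F[OF m(1)] Y(3) by blast
  then obtain Z where Z: "\<And>y. y \<in> Y \<Longrightarrow> Z y \<in> ES {1..nuc (m - 1)} \<and> norm (Z y) \<le> cc \<and> (\<forall>g\<in>FS {1..nuc (m - 1 - 1)}. blinfun_apply g (Z y) = blinfun_apply g y)"
    by (metis bchoice)
  define Y' where "Y' = (\<lambda>y. (1 / (1 + cc)) *\<^sub>R (y - Z y)) ` Y"
  let ?I = "{1..nuc (m - 1 - 1)}" and ?J = "{nuc (m - 1 - 1)<..nuc (q + 1)}"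
  have le1: "nuc (m - 1) \<le> nuc (q + 1)" "nuc (m - 1 - 1) \<le> nuc (q + 1)" using m by (auto intro: nuc_mono)
  have IJ: "?I \<union> ?J = {1..nuc (q + 1)}" using le1 by auto
  have cpos: "1 + cc > 0" using cc_pos by simp
  have mem: "(1 / (1 + cc)) *\<^sub>R (y - Z y) \<in> ES ?J \<and> norm ((1 / (1 + cc)) *\<^sub>R (y - Z y)) \<le> 1" if y: "y \<in> Y" for y
  proof
    have yE: "y \<in> ES {1..nuc (q + 1)}" using Y(2) y by auto
    have zE: "Z y \<in> ES {1..nuc (q + 1)}" using Z[OF y] ES_mono[of "{1..nuc (m - 1)}" "{1..nuc (q + 1)}"] le1 by auto
    have hE: "y - Z y \<in> ES (?I \<union> ?J)" using yE zE IJ unfolding ES_def by (simp add: span_diff)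
    have "y - Z y \<in> ES ?J"
    proof (rule K3[OF _ _ _ hE])
      show "0 \<notin> ?I" by simp
      show "0 \<notin> ?J" by simp
      show "?I \<inter> ?J = {}" by auto
      fix i f assume i: "i \<in> ?I" "f \<in> biorth E' i"
      have "f \<in> FS ?I" using FS_single[OF i(2)] FS_mono[of "{i}" ?I] i(1) by auto
      thus "blinfun_apply f (y - Z y) = 0" using Z[OF y] by (simp add: blinfun.bilinear_simps)
    qed
    thus "(1 / (1 + cc)) *\<^sub>R (y - Z y) \<in> ES ?J" unfolding ES_def by (simp add: span_scale)
    have "norm (y - Z y) \<le> norm y + norm (Z y)" by (rule norm_triangle_ineq4)
    also have "\<dots> \<le> 1 + cc" using Y(3) y Z[OF y] by (intro add_mono) auto
    finally have nle: "norm (y - Z y) \<le> 1 + cc" .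
    have "norm ((1 / (1 + cc)) *\<^sub>R (y - Z y)) = \<bar>1 / (1 + cc)\<bar> * norm (y - Z y)" by (simp only: norm_scaleR)
    also have "\<dots> = norm (y - Z y) / (1 + cc)" using cpos by simp
    also have "\<dots> \<le> 1" using nle cpos by simp
    finally show "norm ((1 / (1 + cc)) *\<^sub>R (y - Z y)) \<le> 1" .
  qed
  show ?thesis
  proof (intro exI[of _ Y'] conjI ballI)
    show "finite Y'" unfolding Y'_def using Y(1) by simp
    show "Y' \<subseteq> ES ?J" unfolding Y'_def using mem by blast
    show "\<And>t. t \<in> Y' \<Longrightarrow> norm t \<le> 1" unfolding Y'_def using mem by blast
    fix f assume f: "f \<in> FS {nuc (m - 1)<..nuc q}"
    have "{nuc (m - 1)<..nuc q} \<subseteq> {1..nuc q}" by auto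
    hence "f \<in> FS {1..nuc q}" using f FS_mono by blast
    then obtain y where y: "y \<in> Y" "norm f \<le> cc * \<bar>blinfun_apply f y\<bar>" using Y(4) by blast
    have "{nuc (m - 1)<..nuc q} \<inter> {1..nuc (m - 1)} = {}" by auto
    hence z0: "blinfun_apply f (Z y) = 0"
      using K1[of "{1..nuc (m - 1)}" "{nuc (m - 1)<..nuc q}" f "Z y"] Z[OF y(1)] f by auto
    let ?t = "(1 / (1 + cc)) *\<^sub>R (y - Z y)"
    have "blinfun_apply f ?t = blinfun_apply f y / (1 + cc)" using z0 by (simp add: blinfun.bilinear_simps)
    hence "cc * (1 + cc) * \<bar>blinfun_apply f ?t\<bar> = cc * \<bar>blinfun_apply f y\<bar>" using cpos by (simp add: abs_div)
    hence "norm f \<le> cc * (1 + cc) * \<bar>blinfun_apply f ?t\<bar>" using y(2) by linarith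
    moreover have "?t \<in> Y'" unfolding Y'_def using y(1) by blast
    ultimately show "\<exists>t\<in>Y'. norm f \<le> cc * (1 + cc) * \<bar>blinfun_apply f t\<bar>" by blast
  qed
qed
end

theorem lemma2p2:
  fixes E' :: "nat \<Rightarrow> 'a::banach set"
  assumes "separable_space TYPE('a)"
    and "FMD E'"
    and "one_norming E'"
  shows "\<exists>E. is_blocking E' E \<and> E 0 = {0} \<and> FMD E \<and>
    (\<forall>m n. 1 \<le> m \<and> m \<le> n \<longrightarrow>
      (\<forall>e. lin_functional_on (span (\<Union>j\<in>{m..n}. E j)) e \<longrightarrow>
         (\<exists>x\<in>span (\<Union>j\<in>{m - 1..n + 1}. biorth0 E j).
            (\<forall>y\<in>span (\<Union>j\<in>{m..n}. E j). blinfun_apply x y = e y) \<and>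
            norm x \<le> 5 / 2 * dual_norm_on (span (\<Union>j\<in>{m..n}. E j)) e)) \<and>
      (\<forall>fs. lin_functional_on (span (\<Union>j\<in>{m..n}. biorth0 E j)) fs \<longrightarrow>
         (\<exists>z\<in>span (\<Union>j\<in>{m - 1..n + 1}. E j).
            (\<forall>f\<in>span (\<Union>j\<in>{m..n}. biorth0 E j). blinfun_apply f z = fs f) \<and>
            norm z \<le> 5 / 2 * dual_norm_on (span (\<Union>j\<in>{m..n}. biorth0 E j)) fs)) \<and>
      (\<forall>x\<in>span (\<Union>j\<in>{m..n}. biorth0 E j).
         norm x \<le> 5 / 2 * Sup {\<bar>blinfun_apply x y\<bar> | y.
                     y \<in> span (\<Union>j\<in>{m - 1..n + 1}. E j) \<and> norm y \<le> 1}) \<and>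
      (\<forall>x\<in>span (\<Union>j\<in>{m..n}. E j).
         norm x \<le> 5 / 2 * Sup {\<bar>blinfun_apply f x\<bar> | f.
                     f \<in> span (\<Union>j\<in>{m - 1..n + 1}. biorth0 E j) \<and> norm f \<le> 1}))"
proof -
  interpret F: fmdn E' by (intro fmdn.intro fmd.intro fmdn_axioms.intro assms(2) assms(3))
  interpret B: blocked E' F.nuc by (intro blocked.intro fmd.intro blocked_axioms.intro assms(2) F.nuc_sm F.nuc_0)
  have CC: "F.cc * (1 + F.cc) \<le> 5 / 2" unfolding F.cc_def by simp
  have CC0: "0 \<le> F.cc * (1 + F.cc)" unfolding F.cc_def by simp
  have main: "(\<forall>e. lin_functional_on (span (\<Union>j\<in>{m..n}. B.Eb j)) e \<longrightarrow>
         (\<exists>x\<in>span (\<Union>j\<in>{m - 1..n + 1}. biorth0 B.Eb j).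
            (\<forall>y\<in>span (\<Union>j\<in>{m..n}. B.Eb j). blinfun_apply x y = e y) \<and>
            norm x \<le> 5 / 2 * dual_norm_on (span (\<Union>j\<in>{m..n}. B.Eb j)) e)) \<and>
      (\<forall>fs. lin_functional_on (span (\<Union>j\<in>{m..n}. biorth0 B.Eb j)) fs \<longrightarrow>
         (\<exists>z\<in>span (\<Union>j\<in>{m - 1..n + 1}. B.Eb j).
            (\<forall>f\<in>span (\<Union>j\<in>{m..n}. biorth0 B.Eb j). blinfun_apply f z = fs f) \<and>
            norm z \<le> 5 / 2 * dual_norm_on (span (\<Union>j\<in>{m..n}. biorth0 B.Eb j)) fs)) \<and>
      (\<forall>x\<in>span (\<Union>j\<in>{m..n}. biorth0 B.Eb j).
         norm x \<le> 5 / 2 * Sup {\<bar>blinfun_apply x y\<bar> | y.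
                     y \<in> span (\<Union>j\<in>{m - 1..n + 1}. B.Eb j) \<and> norm y \<le> 1}) \<and>
      (\<forall>x\<in>span (\<Union>j\<in>{m..n}. B.Eb j).
         norm x \<le> 5 / 2 * Sup {\<bar>blinfun_apply f x\<bar> | f.
                     f \<in> span (\<Union>j\<in>{m - 1..n + 1}. biorth0 B.Eb j) \<and> norm f \<le> 1})"
    if mn: "1 \<le> m" "m \<le> n" for m n
  proof -
    let ?C = "F.cc * (1 + F.cc)"
    have SE: "span (\<Union>j\<in>{m..n}. B.Eb j) = F.ES {F.nuc (m - 1)<..F.nuc n}"
      by (simp add: B.span_Eb blk_interval[OF F.nuc_sm F.nuc_0])
    have SE': "span (\<Union>j\<in>{m - 1..n + 1}. B.Eb j) = F.ES {F.nuc (m - 1 - 1)<..F.nuc (n + 1)}"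
      by (simp add: B.span_Eb blk_interval[OF F.nuc_sm F.nuc_0])
    have SF: "span (\<Union>j\<in>{m..n}. biorth0 B.Eb j) = F.FS {F.nuc (m - 1)<..F.nuc n}"
      by (simp add: B.span_Fb blk_interval[OF F.nuc_sm F.nuc_0])
    have SF': "span (\<Union>j\<in>{m - 1..n + 1}. biorth0 B.Eb j) = F.FS {F.nuc (m - 1 - 1)<..F.nuc (n + 1)}"
      by (simp add: B.span_Fb blk_interval[OF F.nuc_sm F.nuc_0])
    obtain T where T: "finite T" "T \<subseteq> F.FS {F.nuc (m - 1 - 1)<..F.nuc (n + 1)}" "\<forall>t\<in>T. norm t \<le> 1"
        "\<forall>x\<in>F.ES {F.nuc (m - 1)<..F.nuc n}. \<exists>t\<in>T. norm x \<le> ?C * \<bar>blinfun_apply t x\<bar>"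
      using F.NE[OF mn] by blast
    obtain Y where Y: "finite Y" "Y \<subseteq> F.ES {F.nuc (m - 1 - 1)<..F.nuc (n + 1)}" "\<forall>y\<in>Y. norm y \<le> 1"
        "\<forall>f\<in>F.FS {F.nuc (m - 1)<..F.nuc n}. \<exists>y\<in>Y. norm f \<le> ?C * \<bar>blinfun_apply f y\<bar>"
      using F.NF[OF mn] by blast
    let ?BE = "\<Union>i\<in>{F.nuc (m - 1)<..F.nuc n}. F.Bs i"
    have BE: "finite ?BE" "F.ES {F.nuc (m - 1)<..F.nuc n} = span ?BE" using F.ES_fin[of "{F.nuc (m - 1)<..F.nuc n}"] by auto
    let ?BF = "\<Union>i\<in>{F.nuc (m - 1)<..F.nuc n}. F.Ss i"
    have BF: "finite ?BF" "F.FS {F.nuc (m - 1)<..F.nuc n} = span ?BF" using F.FS_fin[of "{F.nuc (m - 1)<..F.nuc n}"] by auto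
    have P1: "\<exists>x\<in>span (\<Union>j\<in>{m - 1..n + 1}. biorth0 B.Eb j).
            (\<forall>y\<in>span (\<Union>j\<in>{m..n}. B.Eb j). blinfun_apply x y = e y) \<and>
            norm x \<le> 5 / 2 * dual_norm_on (span (\<Union>j\<in>{m..n}. B.Eb j)) e"
      if e: "lin_functional_on (span (\<Union>j\<in>{m..n}. B.Eb j)) e" for e
    proof -
      let ?D = "dual_norm_on (span ?BE) e"
      have lin: "lin_functional_on (span ?BE) e" using e SE BE(2) by simp
      have D: "?D \<ge> 0" "\<forall>x\<in>span ?BE. \<bar>e x\<bar> \<le> ?D * norm x" using dual_norm_bound[OF BE(1) lin] by auto
      have "\<exists>w\<in>F.FS {F.nuc (m - 1 - 1)<..F.nuc (n + 1)}. norm w \<le> ?C * ?D \<and> (\<forall>x\<in>span ?BE. blinfun_apply w x = e x)"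
      proof (rule dual_ext[OF bounded_bilinear_blinfun_apply BE(1) T(1)])
        show "\<And>t. t \<in> T \<Longrightarrow> norm t \<le> 1" using T(3) by blast
        show "T \<subseteq> F.FS {F.nuc (m - 1 - 1)<..F.nuc (n + 1)}" using T(2) .
        show "subspace (F.FS {F.nuc (m - 1 - 1)<..F.nuc (n + 1)})" unfolding F.FS_def by simp
        show "\<And>x. x \<in> span ?BE \<Longrightarrow> \<exists>t\<in>T. norm x \<le> ?C * \<bar>blinfun_apply t x\<bar>" using T(4) BE(2) by blast
        show "lin_functional_on (span ?BE) e" by (rule lin)
        show "\<And>x. x \<in> span ?BE \<Longrightarrow> \<bar>e x\<bar> \<le> ?D * norm x" using D(2) by blast
        show "0 \<le> ?C" by (rule CC0)
        show "0 \<le> ?D" by (rule D(1))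
      qed
      then obtain w where w: "w \<in> F.FS {F.nuc (m - 1 - 1)<..F.nuc (n + 1)}" "norm w \<le> ?C * ?D"
          "\<forall>x\<in>span ?BE. blinfun_apply w x = e x" by blast
      have "?C * ?D \<le> 5 / 2 * ?D" using CC D(1) by (rule mult_right_mono)
      thus ?thesis using w SF' SE BE(2) by (intro bexI[of _ w]) auto
    qed
    have P2: "\<exists>z\<in>span (\<Union>j\<in>{m - 1..n + 1}. B.Eb j).
            (\<forall>f\<in>span (\<Union>j\<in>{m..n}. biorth0 B.Eb j). blinfun_apply f z = fs f) \<and>
            norm z \<le> 5 / 2 * dual_norm_on (span (\<Union>j\<in>{m..n}. biorth0 B.Eb j)) fs"
      if fs: "lin_functional_on (span (\<Union>j\<in>{m..n}. biorth0 B.Eb j)) fs" for fs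
    proof -
      let ?D = "dual_norm_on (span ?BF) fs"
      have lin: "lin_functional_on (span ?BF) fs" using fs SF BF(2) by simp
      have D: "?D \<ge> 0" "\<forall>x\<in>span ?BF. \<bar>fs x\<bar> \<le> ?D * norm x" using dual_norm_bound[OF BF(1) lin] by auto
      have "\<exists>w\<in>F.ES {F.nuc (m - 1 - 1)<..F.nuc (n + 1)}. norm w \<le> ?C * ?D \<and> (\<forall>f\<in>span ?BF. blinfun_apply f w = fs f)"
      proof (rule dual_ext[OF bb_eval BF(1) Y(1)])
        show "\<And>t. t \<in> Y \<Longrightarrow> norm t \<le> 1" using Y(3) by blast
        show "Y \<subseteq> F.ES {F.nuc (m - 1 - 1)<..F.nuc (n + 1)}" using Y(2) .
        show "subspace (F.ES {F.nuc (m - 1 - 1)<..F.nuc (n + 1)})" unfolding F.ES_def by simp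
        show "\<And>f. f \<in> span ?BF \<Longrightarrow> \<exists>t\<in>Y. norm f \<le> ?C * \<bar>blinfun_apply f t\<bar>" using Y(4) BF(2) by blast
        show "lin_functional_on (span ?BF) fs" by (rule lin)
        show "\<And>x. x \<in> span ?BF \<Longrightarrow> \<bar>fs x\<bar> \<le> ?D * norm x" using D(2) by blast
        show "0 \<le> ?C" by (rule CC0)
        show "0 \<le> ?D" by (rule D(1))
      qed
      then obtain w where w: "w \<in> F.ES {F.nuc (m - 1 - 1)<..F.nuc (n + 1)}" "norm w \<le> ?C * ?D"
          "\<forall>f\<in>span ?BF. blinfun_apply f w = fs f" by blast
      have "?C * ?D \<le> 5 / 2 * ?D" using CC D(1) by (rule mult_right_mono)
      thus ?thesis using w SE' SF BF(2) by (intro bexI[of _ w]) auto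
    qed
    have P3: "norm x \<le> 5 / 2 * Sup {\<bar>blinfun_apply x y\<bar> | y.
                     y \<in> span (\<Union>j\<in>{m - 1..n + 1}. B.Eb j) \<and> norm y \<le> 1}"
      if x: "x \<in> span (\<Union>j\<in>{m..n}. biorth0 B.Eb j)" for x
    proof -
      let ?A = "{\<bar>blinfun_apply x y\<bar> | y. y \<in> span (\<Union>j\<in>{m - 1..n + 1}. B.Eb j) \<and> norm y \<le> 1}"
      obtain y where y: "y \<in> Y" "norm x \<le> ?C * \<bar>blinfun_apply x y\<bar>" using Y(4) x SF by blast
      have yin: "\<bar>blinfun_apply x y\<bar> \<in> ?A" using y(1) Y(2,3) SE' by blast
      have bdd: "bdd_above ?A"
      proof (rule bdd_aboveI)
        fix a assume "a \<in> ?A"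
        then obtain y' where y': "a = \<bar>blinfun_apply x y'\<bar>" "norm y' \<le> 1" by blast
        have "a \<le> norm x * norm y'" using y'(1) norm_blinfun[of x y'] by simp
        also have "\<dots> \<le> norm x * 1" using y'(2) by (intro mult_left_mono) auto
        finally show "a \<le> norm x" by simp
      qed
      have le: "\<bar>blinfun_apply x y\<bar> \<le> Sup ?A" using yin bdd by (rule cSup_upper)
      have "norm x \<le> ?C * Sup ?A" using y(2) le CC0 by (meson mult_left_mono order_trans)
      also have "\<dots> \<le> 5 / 2 * Sup ?A" using CC le by (intro mult_right_mono) auto
      finally show ?thesis .
    qed
    have P4: "norm x \<le> 5 / 2 * Sup {\<bar>blinfun_apply f x\<bar> | f.
                     f \<in> span (\<Union>j\<in>{m - 1..n + 1}. biorth0 B.Eb j) \<and> norm f \<le> 1}"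
      if x: "x \<in> span (\<Union>j\<in>{m..n}. B.Eb j)" for x
    proof -
      let ?A = "{\<bar>blinfun_apply f x\<bar> | f. f \<in> span (\<Union>j\<in>{m - 1..n + 1}. biorth0 B.Eb j) \<and> norm f \<le> 1}"
      obtain t where t: "t \<in> T" "norm x \<le> ?C * \<bar>blinfun_apply t x\<bar>" using T(4) x SE by blast
      have tin: "\<bar>blinfun_apply t x\<bar> \<in> ?A" using t(1) T(2,3) SF' by blast
      have bdd: "bdd_above ?A"
      proof (rule bdd_aboveI)
        fix a assume "a \<in> ?A"
        then obtain f where f: "a = \<bar>blinfun_apply f x\<bar>" "norm f \<le> 1" by blast
        have "a \<le> norm f * norm x" using f(1) norm_blinfun[of f x] by simp
        also have "\<dots> \<le> 1 * norm x" using f(2) by (intro mult_right_mono) auto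
        finally show "a \<le> norm x" by simp
      qed
      have le: "\<bar>blinfun_apply t x\<bar> \<le> Sup ?A" using tin bdd by (rule cSup_upper)
      have "norm x \<le> ?C * Sup ?A" using t(2) le CC0 by (meson mult_left_mono order_trans)
      also have "\<dots> \<le> 5 / 2 * Sup ?A" using CC le by (intro mult_right_mono) auto
      finally show ?thesis .
    qed
    show ?thesis using P1 P2 P3 P4 by blast
  qed
  have A4: "\<forall>m n. 1 \<le> m \<and> m \<le> n \<longrightarrow> ((\<forall>e. lin_functional_on (span (\<Union>j\<in>{m..n}. B.Eb j)) e \<longrightarrow>
         (\<exists>x\<in>span (\<Union>j\<in>{m - 1..n + 1}. biorth0 B.Eb j).
            (\<forall>y\<in>span (\<Union>j\<in>{m..n}. B.Eb j). blinfun_apply x y = e y) \<and>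
            norm x \<le> 5 / 2 * dual_norm_on (span (\<Union>j\<in>{m..n}. B.Eb j)) e)) \<and>
      (\<forall>fs. lin_functional_on (span (\<Union>j\<in>{m..n}. biorth0 B.Eb j)) fs \<longrightarrow>
         (\<exists>z\<in>span (\<Union>j\<in>{m - 1..n + 1}. B.Eb j).
            (\<forall>f\<in>span (\<Union>j\<in>{m..n}. biorth0 B.Eb j). blinfun_apply f z = fs f) \<and>
            norm z \<le> 5 / 2 * dual_norm_on (span (\<Union>j\<in>{m..n}. biorth0 B.Eb j)) fs)) \<and>
      (\<forall>x\<in>span (\<Union>j\<in>{m..n}. biorth0 B.Eb j).
         norm x \<le> 5 / 2 * Sup {\<bar>blinfun_apply x y\<bar> | y.
                     y \<in> span (\<Union>j\<in>{m - 1..n + 1}. B.Eb j) \<and> norm y \<le> 1}) \<and>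
      (\<forall>x\<in>span (\<Union>j\<in>{m..n}. B.Eb j).
         norm x \<le> 5 / 2 * Sup {\<bar>blinfun_apply f x\<bar> | f.
                     f \<in> span (\<Union>j\<in>{m - 1..n + 1}. biorth0 B.Eb j) \<and> norm f \<le> 1}))"
    using main by blast
  have A1: "is_blocking E' B.Eb" by (rule B.blocking_Eb)
  have A2: "B.Eb 0 = {0}" by (simp add: B.Eb_def)
  have A3: "FMD B.Eb" by (rule B.FMD_Eb)
  show ?thesis using A1 A2 A3 A4 by (intro exI[of _ B.Eb] conjI) assumption+
qed

end
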